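(* Let $k$ be a commutative ring, $n\geq 3$ and $m\geq 3$, and let $D_m$ be the dg-category defined below. For all $1\leq i,j\leq m$ there are isomorphisms of graded $k$-modules \[ H_\ast\operatorname{Hom}_{D_m}(z_i,z_j)\cong\begin{cases} k[t_{n-2}] & j=i,\\ k[t_{n-2}] & j=i+1,\ 1\le i\le m-1,\\ k[t_{n-2}][n-m] & i=m,\ j=1,\\ 0 & \text{otherwise},\end{cases}\] where $k[t_{n-2}]$ denotes the polynomial ring on a generator of degree $n-2$ (as a graded $k$-module) and $[s]$ shifts degrees up by $s$.
   Context: $D_m$ is the $k$-linear dg-category with objects $z_1,\dots,z_m$ whose morphisms are freely generated (as a graded $k$-linear category) by morphisms $b_{i,j}:z_i\to z_j$ for all $i\neq j$, of degree $j-i-1$ if $j>i$ and of degree $n+j-i-1$ if $j<i$, with differential determined on generators by \[ d(b_{i,j})=\begin{cases} \sum_{i<k<j}(-1)^{j-k+1}b_{k,j}b_{i,k} & j>i,\\ \sum_{i<k\le m}(-1)^{j-k+n+1}b_{k,j}b_{i,k}+\sum_{1\le k<j}(-1)^{j-k+1}b_{k,j}b_{i,k} & j<i,\end{cases}\] where $b_{k,j}b_{i,k}$ denotes the composite $z_i\to z_k\to z_j$. Homological grading is used. *)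

theory Defs
  imports Main
begin

text \<open>Objects are z_1..z_m, encoded by 1..m.
  A generator b_{a,b} : z_a -> z_b is encoded by the pair (a,b).
  A path (composable word in generators) is a list [f_1,...,f_r] standing for the
  composite f_r o ... o f_1 (f_1 applied first); the empty list is the identity.
  Hom_{D_m}(z_i,z_j) is the free k-module on the paths from z_i to z_j.\<close>

type_synonym path = "(nat \<times> nat) list"

definition is_path :: "nat \<Rightarrow> nat \<Rightarrow> nat \<Rightarrow> path \<Rightarrow> bool" where
  "is_path m i j p \<longleftrightarrow>
     (p = [] \<and> i = j) \<or>
     (p \<noteq> [] \<and> fst (hd p) = i \<and> snd (last p) = j \<and>
      (\<forall>t < length p. fst (p ! t) \<noteq> snd (p ! t) \<and>
          fst (p ! t) \<in> {1..m} \<and> snd (p ! t) \<in> {1..m}) \<and>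
      (\<forall>t. Suc t < length p \<longrightarrow> snd (p ! t) = fst (p ! Suc t)))"

definition gdeg :: "nat \<Rightarrow> nat \<times> nat \<Rightarrow> int" where
  "gdeg n g = (if fst g < snd g then int (snd g) - int (fst g) - 1
               else int n + int (snd g) - int (fst g) - 1)"

definition pdeg :: "nat \<Rightarrow> path \<Rightarrow> int" where
  "pdeg n p = sum_list (map (gdeg n) p)"

definition sgn1 :: "int \<Rightarrow> 'k::comm_ring_1" where
  "sgn1 e = (if even e then 1 else - 1)"

text \<open>Coefficient of the length-2 path q in d(b_{a,b}); note that b_{c,b} b_{a,c} is
  the path [(a,c),(c,b)].\<close>
definition dgen :: "nat \<Rightarrow> nat \<Rightarrow> nat \<times> nat \<Rightarrow> path \<Rightarrow> 'k::comm_ring_1" where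
  "dgen n m g q =
     (let a = fst g; b = snd g in
      if a < b then
        (\<Sum>c\<in>{a<..<b}. if q = [(a,c),(c,b)] then sgn1 (int b - int c + 1) else 0)
      else
        (\<Sum>c\<in>{a<..m}. if q = [(a,c),(c,b)] then sgn1 (int b - int c + int n + 1) else 0)
        + (\<Sum>c\<in>{1..<b}. if q = [(a,c),(c,b)] then sgn1 (int b - int c + 1) else 0))"

text \<open>Differential of a path p, extended by the Leibniz rule
  d(g o f) = d(g) o f + (-1)^{|g|} g o d(f): coefficient of the path q in d(p).\<close>
definition dpath :: "nat \<Rightarrow> nat \<Rightarrow> path \<Rightarrow> path \<Rightarrow> 'k::comm_ring_1" where
  "dpath n m p q =
     (\<Sum>t<length p. sgn1 (pdeg n (drop (Suc t) p)) *
        (if length q = Suc (length p) \<and> take t q = take t p \<and>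
            drop (Suc (Suc t)) q = drop (Suc t) p
         then dgen n m (p ! t) [q ! t, q ! Suc t] else 0))"

definition chains :: "nat \<Rightarrow> nat \<Rightarrow> nat \<Rightarrow> nat \<Rightarrow> int \<Rightarrow> (path \<Rightarrow> 'k::comm_ring_1) set" where
  "chains n m i j d = {c. finite {p. c p \<noteq> 0} \<and>
       (\<forall>p. c p \<noteq> 0 \<longrightarrow> is_path m i j p \<and> pdeg n p = d)}"

definition dch :: "nat \<Rightarrow> nat \<Rightarrow> (path \<Rightarrow> 'k::comm_ring_1) \<Rightarrow> path \<Rightarrow> 'k" where
  "dch n m c q = (\<Sum>p\<in>{p. c p \<noteq> 0}. c p * dpath n m p q)"

definition cycles :: "nat \<Rightarrow> nat \<Rightarrow> nat \<Rightarrow> nat \<Rightarrow> int \<Rightarrow> (path \<Rightarrow> 'k::comm_ring_1) set" where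
  "cycles n m i j d = {c \<in> chains n m i j d. \<forall>q. dch n m c q = 0}"

definition boundaries :: "nat \<Rightarrow> nat \<Rightarrow> nat \<Rightarrow> nat \<Rightarrow> int \<Rightarrow> (path \<Rightarrow> 'k::comm_ring_1) set" where
  "boundaries n m i j d = dch n m ` chains n m i j (d + 1)"

definition coset :: "(path \<Rightarrow> 'k::comm_ring_1) set \<Rightarrow> (path \<Rightarrow> 'k) \<Rightarrow> (path \<Rightarrow> 'k) set" where
  "coset B c = {(\<lambda>q. c q + b q) | b. b \<in> B}"

definition homology :: "nat \<Rightarrow> nat \<Rightarrow> nat \<Rightarrow> nat \<Rightarrow> int \<Rightarrow> (path \<Rightarrow> 'k::comm_ring_1) set set" where
  "homology n m i j d = coset (boundaries n m i j d) ` cycles n m i j d"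

definition homology_iso :: "nat \<Rightarrow> nat \<Rightarrow> nat \<Rightarrow> nat \<Rightarrow> int \<Rightarrow> 'k::comm_ring_1 set \<Rightarrow> bool" where
  "homology_iso n m i j d M \<longleftrightarrow>
     (\<exists>\<psi>. bij_betw \<psi> (homology n m i j d) M \<and>
        (\<forall>c\<in>cycles n m i j d. \<forall>c'\<in>cycles n m i j d.
           \<psi> (coset (boundaries n m i j d) (\<lambda>q. c q + c' q)) =
           \<psi> (coset (boundaries n m i j d) c) + \<psi> (coset (boundaries n m i j d) c')) \<and>
        (\<forall>a. \<forall>c\<in>cycles n m i j d.
           \<psi> (coset (boundaries n m i j d) (\<lambda>q. a * c q)) = a * \<psi> (coset (boundaries n m i j d) c)))"

text \<open>Degree-d part of k[t_e] (t of degree e): k if d = p*e for some p >= 0, else 0.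
  The shift M[s] has (M[s])_d = M_{d-s}.\<close>
definition polyk :: "int \<Rightarrow> int \<Rightarrow> 'k::comm_ring_1 set" where
  "polyk e d = (if \<exists>p::nat. d = int p * e then UNIV else {0})"

end

theory Submission
  imports Defs
begin

definition csupp :: "(path \<Rightarrow> 'k::comm_ring_1) \<Rightarrow> path set" where
  "csupp c = {p. c p \<noteq> 0}"
definition fin :: "(path \<Rightarrow> 'k::comm_ring_1) \<Rightarrow> bool" where
  "fin c \<longleftrightarrow> finite (csupp c)"
definition lin :: "(path \<Rightarrow> path \<Rightarrow> 'k) \<Rightarrow> (path \<Rightarrow> 'k::comm_ring_1) \<Rightarrow> path \<Rightarrow> 'k" where
  "lin f c = (\<lambda>q. \<Sum>p\<in>csupp c. c p * f p q)"
definition dl :: "path \<Rightarrow> path \<Rightarrow> 'k::comm_ring_1" where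
  "dl p = (\<lambda>q. if q = p then 1 else 0)"
definition pre :: "nat \<times> nat \<Rightarrow> (path \<Rightarrow> 'k::comm_ring_1) \<Rightarrow> path \<Rightarrow> 'k" where
  "pre g c = (\<lambda>q. case q of [] \<Rightarrow> 0 | x # r \<Rightarrow> if x = g then c r else 0)"

lemma lin_sum:
  assumes "finite S" "csupp c \<subseteq> S"
  shows "lin f c q = (\<Sum>p\<in>S. c p * f p q)"
  unfolding lin_def
  by (rule sum.mono_neutral_left) (use assms in \<open>auto simp: csupp_def\<close>)

lemma fin_add: "fin c \<Longrightarrow> fin c' \<Longrightarrow> fin (\<lambda>q. c q + c' q)"
  unfolding fin_def csupp_def
  by (rule finite_subset[of _ "{p. c p \<noteq> 0} \<union> {p. c' p \<noteq> 0}"]) auto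

lemma fin_smult: "fin c \<Longrightarrow> fin (\<lambda>q. a * c q)"
  unfolding fin_def csupp_def
  by (rule finite_subset[of _ "{p. c p \<noteq> 0}"]) auto

lemma fin_neg: "fin c \<Longrightarrow> fin (\<lambda>q. - c q)"
  unfolding fin_def csupp_def by simp

lemma fin_diff: "fin c \<Longrightarrow> fin c' \<Longrightarrow> fin (\<lambda>q. c q - c' q)"
  using fin_add[of c "\<lambda>q. - c' q"] fin_neg[of c'] by simp

lemma fin_zero[simp]: "fin (\<lambda>q. 0)"
  unfolding fin_def csupp_def by simp

lemma fin_dl[simp]: "fin (dl p)"
  unfolding fin_def csupp_def dl_def by simp

lemma fin_sum: "finite I \<Longrightarrow> (\<And>x. x \<in> I \<Longrightarrow> fin (c x)) \<Longrightarrow> fin (\<lambda>q. \<Sum>x\<in>I. c x q)"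
  by (induction I rule: finite_induct) (auto intro: fin_add)

lemma csupp_pre: "csupp (pre g c) = Cons g ` csupp c"
proof (rule set_eqI)
  fix x show "x \<in> csupp (pre g c) \<longleftrightarrow> x \<in> Cons g ` csupp c"
    by (cases x) (auto simp: csupp_def pre_def)
qed

lemma fin_pre: "fin c \<Longrightarrow> fin (pre g c)"
  unfolding fin_def by (simp add: csupp_pre)

lemma lin_add:
  assumes "fin c" "fin c'"
  shows "lin f (\<lambda>q. c q + c' q) = (\<lambda>q. lin f c q + lin f c' q)"
proof
  fix q
  let ?S = "csupp c \<union> csupp c'"
  have fS: "finite ?S" using assms by (simp add: fin_def)
  have "lin f (\<lambda>q. c q + c' q) q = (\<Sum>p\<in>?S. (c p + c' p) * f p q)"
    by (rule lin_sum) (use fS in \<open>auto simp: csupp_def\<close>)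
  also have "\<dots> = (\<Sum>p\<in>?S. c p * f p q) + (\<Sum>p\<in>?S. c' p * f p q)"
    by (simp add: distrib_right sum.distrib)
  also have "\<dots> = lin f c q + lin f c' q"
  proof -
    have "lin f c q = (\<Sum>p\<in>?S. c p * f p q)" by (rule lin_sum) (use fS in auto)
    moreover have "lin f c' q = (\<Sum>p\<in>?S. c' p * f p q)" by (rule lin_sum) (use fS in auto)
    ultimately show ?thesis by simp
  qed
  finally show "lin f (\<lambda>q. c q + c' q) q = lin f c q + lin f c' q" .
qed

lemma lin_smult:
  assumes "fin c"
  shows "lin f (\<lambda>q. a * c q) = (\<lambda>q. a * lin f c q)"
proof
  fix q
  have fS: "finite (csupp c)" using assms by (simp add: fin_def)
  have "lin f (\<lambda>q. a * c q) q = (\<Sum>p\<in>csupp c. (a * c p) * f p q)"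
    by (rule lin_sum) (use fS in \<open>auto simp: csupp_def\<close>)
  also have "\<dots> = a * lin f c q" by (simp add: lin_def sum_distrib_left mult.assoc)
  finally show "lin f (\<lambda>q. a * c q) q = a * lin f c q" .
qed

lemma lin_zero[simp]: "lin f (\<lambda>q. 0) = (\<lambda>q. 0)"
  by (simp add: lin_def csupp_def)

lemma lin_neg:
  assumes "fin c"
  shows "lin f (\<lambda>q. - c q) = (\<lambda>q. - lin f c q)"
  using lin_smult[OF assms, of f "-1"] by simp

lemma lin_diff:
  assumes "fin c" "fin c'"
  shows "lin f (\<lambda>q. c q - c' q) = (\<lambda>q. lin f c q - lin f c' q)"
  using lin_add[OF assms(1) fin_neg[OF assms(2)], of f] lin_neg[OF assms(2), of f] by simp

lemma lin_dl[simp]: "lin f (dl p) = f p"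
proof
  fix q
  show "lin f (dl p) q = f p q"
    by (subst lin_sum[of "{p}"]) (auto simp: csupp_def dl_def)
qed

lemma lin_fsum:
  assumes "finite I" "\<And>x. x \<in> I \<Longrightarrow> fin (c x)"
  shows "lin f (\<lambda>q. \<Sum>x\<in>I. c x q) = (\<lambda>q. \<Sum>x\<in>I. lin f (c x) q)"
  using assms
proof (induction I rule: finite_induct)
  case empty then show ?case by simp
next
  case (insert x F)
  have "lin f (\<lambda>q. \<Sum>x\<in>insert x F. c x q) = lin f (\<lambda>q. c x q + (\<Sum>x\<in>F. c x q))"
    using insert by simp
  also have "\<dots> = (\<lambda>q. lin f (c x) q + lin f (\<lambda>q. \<Sum>x\<in>F. c x q) q)"
    using insert by (intro lin_add) (auto intro: fin_sum)
  finally show ?case using insert by simp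
qed

lemma csupp_lin: "csupp (lin f c) \<subseteq> (\<Union>p\<in>csupp c. csupp (f p))"
proof
  fix x assume "x \<in> csupp (lin f c)"
  then have "(\<Sum>p\<in>csupp c. c p * f p x) \<noteq> 0" by (simp add: csupp_def lin_def)
  then obtain p where "p \<in> csupp c" "c p * f p x \<noteq> 0"
    using sum.not_neutral_contains_not_neutral by blast
  then show "x \<in> (\<Union>p\<in>csupp c. csupp (f p))" by (auto simp: csupp_def)
qed

lemma fin_lin:
  assumes "fin c" "\<And>p. fin (f p)"
  shows "fin (lin f c)"
proof -
  have "csupp (lin f c) \<subseteq> (\<Union>p\<in>csupp c. csupp (f p))"
    by (rule csupp_lin)
  moreover have "finite (\<Union>p\<in>csupp c. csupp (f p))"
    using assms by (auto simp: fin_def)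
  ultimately show ?thesis by (simp add: fin_def finite_subset)
qed

lemma lin_comp:
  assumes "fin c" "\<And>p. fin (f p)"
  shows "lin g (lin f c) = lin (\<lambda>p. lin g (f p)) c"
proof
  fix q
  let ?S = "\<Union>p\<in>csupp c. csupp (f p)"
  have fS: "finite ?S" using assms by (auto simp: fin_def)
  have sub: "csupp (lin f c) \<subseteq> ?S"
    by (rule csupp_lin)
  have "lin g (lin f c) q = (\<Sum>p'\<in>?S. lin f c p' * g p' q)"
    by (rule lin_sum[OF fS sub])
  also have "\<dots> = (\<Sum>p'\<in>?S. \<Sum>p\<in>csupp c. c p * f p p' * g p' q)"
    by (simp add: lin_def sum_distrib_right)
  also have "\<dots> = (\<Sum>p\<in>csupp c. c p * (\<Sum>p'\<in>?S. f p p' * g p' q))"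
    by (subst sum.swap) (simp add: sum_distrib_left mult.assoc)
  also have "\<dots> = (\<Sum>p\<in>csupp c. c p * lin g (f p) q)"
    by (intro sum.cong refl arg_cong2[where f="(*)"], subst lin_sum[of ?S]) (use fS in auto)
  finally show "lin g (lin f c) q = lin (\<lambda>p. lin g (f p)) c q" by (simp add: lin_def)
qed

lemma lin_cong: "(\<And>p. c p \<noteq> 0 \<Longrightarrow> f p = f' p) \<Longrightarrow> lin f c = lin f' c"
  unfolding lin_def csupp_def by auto

lemma lin_fadd:
  "lin (\<lambda>p q. f1 p q + f2 p q) c = (\<lambda>q. lin f1 c q + lin f2 c q)"
  by (simp add: lin_def distrib_left sum.distrib)

lemma lin_fdiff:
  "lin (\<lambda>p q. f1 p q - f2 p q) c = (\<lambda>q. lin f1 c q - lin f2 c q)"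
  by (simp add: lin_def right_diff_distrib sum_subtractf)

lemma lin_fsmult:
  "lin (\<lambda>p q. a * f p q) c = (\<lambda>q. a * lin f c q)"
  by (simp add: lin_def sum_distrib_left mult.left_commute)

lemma lin_fzero[simp]: "lin (\<lambda>p q. 0) c = (\<lambda>q. 0)"
  by (simp add: lin_def)

lemma lin_pre:
  assumes "fin c"
  shows "lin g (pre a c) = lin (\<lambda>r. g (a # r)) c"
proof
  fix q
  have "csupp (pre a c) = Cons a ` csupp c" by (rule csupp_pre)
  then show "lin g (pre a c) q = lin (\<lambda>r. g (a # r)) c q"
    unfolding lin_def by (simp add: sum.reindex pre_def)
qed

lemma lin_id: "fin c \<Longrightarrow> lin dl c = c"
proof
  fix q assume "fin c"
  show "lin dl c q = c q"
  proof (cases "c q = 0")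
    case True
    then show ?thesis unfolding lin_def dl_def by (auto intro: sum.neutral)
  next
    case False
    have "(\<Sum>p\<in>csupp c. c p * (if q = p then 1 else 0)) = (\<Sum>p\<in>csupp c. if q = p then c p else 0)"
      by (rule sum.cong) auto
    also have "\<dots> = c q" using \<open>fin c\<close> False by (simp add: fin_def csupp_def)
    finally show ?thesis unfolding lin_def dl_def .
  qed
qed

lemma lin_dl_pre: "fin c \<Longrightarrow> lin (\<lambda>r. dl (a # r)) c = pre a c"
proof
  fix q assume f: "fin c"
  show "lin (\<lambda>r. dl (a # r)) c q = pre a c q"
  proof (cases q)
    case Nil then show ?thesis by (simp add: lin_def dl_def pre_def)
  next
    case (Cons x r)
    show ?thesis
    proof (cases "x = a")
      case True
      have "lin (\<lambda>r. dl (a # r)) c q = lin dl c r"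
        unfolding lin_def dl_def using Cons True by simp
      then show ?thesis using lin_id[OF f] Cons True by (simp add: pre_def)
    next
      case False
      then show ?thesis using Cons by (simp add: lin_def dl_def pre_def)
    qed
  qed
qed


lemma sgn1_add: "(sgn1 (a + b) :: 'k::comm_ring_1) = sgn1 a * sgn1 b"
  unfolding sgn1_def by auto

lemma sgn1_sq: "(sgn1 a :: 'k::comm_ring_1) * sgn1 a = 1"
  unfolding sgn1_def by auto

lemma sgn1_cong: "even (a - b) \<Longrightarrow> (sgn1 a :: 'k::comm_ring_1) = sgn1 b"
  unfolding sgn1_def by (metis add_diff_cancel_left' diff_add_cancel even_add)

lemma sgn1_p1: "(sgn1 (a + 1) :: 'k::comm_ring_1) = - sgn1 a"
  unfolding sgn1_def by auto

lemma sgn1_m1: "(sgn1 (a - 1) :: 'k::comm_ring_1) = - sgn1 a"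
  unfolding sgn1_def by auto

definition Cs :: "nat \<Rightarrow> nat \<Rightarrow> nat \<Rightarrow> nat set" where
  "Cs m a b = (if a < b then {a<..<b} else {a<..m} \<union> {1..<b})"

lemma finite_Cs[simp]: "finite (Cs m a b)"
  by (simp add: Cs_def)

lemma gdeg_split: "x \<in> Cs m a b \<Longrightarrow> gdeg n (a,b) = gdeg n (a,x) + gdeg n (x,b) + 1"
  by (auto simp: Cs_def gdeg_def split: if_splits)

lemma dgen_Cs:
  "(dgen n m (a,b) q :: 'k::comm_ring_1) =
     (\<Sum>x\<in>Cs m a b. if q = [(a,x),(x,b)] then sgn1 (gdeg n (x,b)) else 0)"
proof (cases "a < b")
  case True
  show ?thesis using True unfolding dgen_def Cs_def Let_def
    by (auto intro!: sum.cong sgn1_cong simp: gdeg_def)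
next
  case False
  have d: "{a<..m} \<inter> {1..<b} = {}" using False by auto
  show ?thesis
    apply (simp only: dgen_def Cs_def Let_def fst_conv snd_conv False if_False)
    apply (subst sum.union_disjoint[OF _ _ d]; simp)
    apply (intro arg_cong2[where f="(+)"] sum.cong refl)
    using False apply (auto intro!: sgn1_cong simp: gdeg_def)
    done
qed

definition spl :: "nat \<Rightarrow> nat \<Rightarrow> nat \<times> nat \<Rightarrow> path \<Rightarrow> path \<Rightarrow> 'k::comm_ring_1" where
  "spl n m g r = (\<lambda>q. \<Sum>x\<in>Cs m (fst g) (snd g).
       sgn1 (gdeg n (x, snd g)) * dl ((fst g, x) # (x, snd g) # r) q)"

lemma pdeg_Nil[simp]: "pdeg n [] = 0" by (simp add: pdeg_def)
lemma pdeg_Cons[simp]: "pdeg n (g # r) = gdeg n g + pdeg n r" by (simp add: pdeg_def)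

lemma dpath_Nil[simp]: "dpath n m [] = (\<lambda>q. 0)"
  by (simp add: dpath_def fun_eq_iff)

lemma dpath_Cons:
  "(dpath n m (g # r) :: path \<Rightarrow> 'k::comm_ring_1) =
     (\<lambda>q. sgn1 (pdeg n r) * spl n m g r q + pre g (dpath n m r) q)"
proof
  fix q :: path
  obtain a b where g: "g = (a,b)" by force
  let ?T = "\<lambda>t. (sgn1 (pdeg n (drop (Suc t) (g # r))) :: 'k) *
        (if length q = Suc (length (g # r)) \<and> take t q = take t (g # r) \<and>
            drop (Suc (Suc t)) q = drop (Suc t) (g # r)
         then dgen n m ((g # r) ! t) [q ! t, q ! Suc t] else 0)"
  have "dpath n m (g # r) q = (\<Sum>t<Suc (length r). ?T t)"
    by (simp add: dpath_def)
  also have "\<dots> = ?T 0 + (\<Sum>t<length r. ?T (Suc t))"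
    by (subst sum.lessThan_Suc_shift) simp
  also have "?T 0 = sgn1 (pdeg n r) * spl n m g r q"
  proof (cases q)
    case Nil then show ?thesis by (simp add: spl_def dl_def)
  next
    case (Cons x0 q1)
    show ?thesis
    proof (cases q1)
      case Nil then show ?thesis using Cons by (simp add: spl_def dl_def)
    next
      case (Cons x1 q2)
      have q: "q = x0 # x1 # q2" using \<open>q = x0 # q1\<close> Cons by simp
      have e1: "?T 0 = sgn1 (pdeg n r) * (if q2 = r then dgen n m g [x0, x1] else 0)"
        using q by (auto simp: length_Suc_conv)
      have e2: "spl n m g r q = (if q2 = r then dgen n m g [x0, x1] else 0)"
        using q g by (auto simp: spl_def dl_def dgen_Cs intro!: sum.cong sum.neutral)
      show ?thesis by (simp only: e1 e2)
    qed
  qed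
  also have "(\<Sum>t<length r. ?T (Suc t)) = pre g (dpath n m r) q"
  proof (cases q)
    case Nil then show ?thesis by (simp add: pre_def)
  next
    case (Cons x q')
    show ?thesis
    proof (cases "x = g")
      case True
      have qq: "q = g # q'" using Cons True by simp
      show ?thesis unfolding qq by (simp add: pre_def dpath_def cong: if_cong)
    next
      case False
      then show ?thesis using Cons by (simp add: pre_def)
    qed
  qed
  finally show "(dpath n m (g # r) q :: 'k) = sgn1 (pdeg n r) * spl n m g r q + pre g (dpath n m r) q" .
qed

lemma fin_smult_dl[simp]: "fin (\<lambda>q. a * dl p q)"
  by (rule fin_smult) simp

lemma fin_spl[simp]: "fin (spl n m g r)"
  unfolding spl_def by (rule fin_sum) auto

lemma fin_dpath[simp]: "fin (dpath n m p)"
proof (induction p)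
  case Nil then show ?case by simp
next
  case (Cons g r) then show ?case
    by (simp add: dpath_Cons fin_add fin_smult fin_pre)
qed

lemma lin_spl:
  "lin f (spl n m g r) = (\<lambda>q. \<Sum>x\<in>Cs m (fst g) (snd g).
       sgn1 (gdeg n (x, snd g)) * f ((fst g, x) # (x, snd g) # r) q)"
  unfolding spl_def
  by (subst lin_fsum) (auto simp: lin_smult)

lemma spl_nz:
  assumes "(spl n m g r q :: 'k::comm_ring_1) \<noteq> 0"
  shows "\<exists>x\<in>Cs m (fst g) (snd g). q = (fst g, x) # (x, snd g) # r"
proof (rule ccontr)
  assume "\<not> ?thesis"
  then have "(spl n m g r q :: 'k) = 0" unfolding spl_def dl_def by (auto intro: sum.neutral)
  with assms show False by simp
qed

lemma dpath_deg: "(dpath n m p q :: 'k::comm_ring_1) \<noteq> 0 \<Longrightarrow> pdeg n q = pdeg n p - 1"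
proof (induction p arbitrary: q)
  case Nil then show ?case by simp
next
  case (Cons g r)
  obtain a b where g: "g = (a,b)" by force
  have "(spl n m g r q :: 'k) \<noteq> 0 \<or> (pre g (dpath n m r) q :: 'k) \<noteq> 0"
    using Cons.prems by (auto simp: dpath_Cons)
  then show ?case
  proof
    assume "(spl n m g r q :: 'k) \<noteq> 0"
    then obtain x where "x \<in> Cs m a b" "q = (a,x) # (x,b) # r" using spl_nz g by fastforce
    then show ?thesis using gdeg_split[of x m a b n] g by simp
  next
    assume h: "(pre g (dpath n m r) q :: 'k) \<noteq> 0"
    then obtain q' where "q = g # q'" "(dpath n m r q' :: 'k) \<noteq> 0"
      by (cases q) (auto simp: pre_def split: if_splits)
    then show ?thesis using Cons.IH by simp
  qed
qed

fun vp :: "nat \<Rightarrow> nat \<Rightarrow> path \<Rightarrow> bool" where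
  "vp m i [] = True"
| "vp m i (g # r) = (fst g = i \<and> 1 \<le> i \<and> i \<le> m \<and> snd g \<noteq> i \<and> 1 \<le> snd g \<and> snd g \<le> m \<and> vp m (snd g) r)"

fun endv :: "nat \<Rightarrow> path \<Rightarrow> nat" where
  "endv i [] = i"
| "endv i (g # r) = endv (snd g) r"

lemma is_path_Nil: "is_path m i j [] \<longleftrightarrow> i = j"
  by (simp add: is_path_def)

lemma is_path_Cons:
  "is_path m i j (g # r) \<longleftrightarrow>
    fst g = i \<and> fst g \<noteq> snd g \<and> fst g \<in> {1..m} \<and> snd g \<in> {1..m} \<and> is_path m (snd g) j r"
proof (cases r)
  case Nil then show ?thesis by (auto simp: is_path_def)
next
  case (Cons g' r')
  show ?thesis
    unfolding is_path_def using Cons by (auto simp: All_less_Suc2)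
qed

lemma is_path_vp: "is_path m i j p \<longleftrightarrow> vp m i p \<and> endv i p = j"
  by (induction p arbitrary: i) (auto simp: is_path_Nil is_path_Cons)


lemma sgn1_mult: "(sgn1 a :: 'k::comm_ring_1) * sgn1 b = sgn1 (a + b)"
  by (simp add: sgn1_add)

lemma sgn1_mult2: "(sgn1 a :: 'k::comm_ring_1) * (sgn1 b * x) = sgn1 (a + b) * x"
  by (simp add: sgn1_add)

lemma sgn1_ev: "even a \<Longrightarrow> (sgn1 a :: 'k::comm_ring_1) = 1"
  by (simp add: sgn1_def)

lemma sgn1_od: "odd a \<Longrightarrow> (sgn1 a :: 'k::comm_ring_1) = -1"
  by (simp add: sgn1_def)

lemma Cs_not: "x \<in> Cs m a b \<Longrightarrow> x \<noteq> a \<and> x \<noteq> b"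
  by (auto simp: Cs_def split: if_splits)

lemma Cs_range: "b \<le> m \<Longrightarrow> x \<in> Cs m a b \<Longrightarrow> 1 \<le> x \<and> x \<le> m"
  by (auto simp: Cs_def split: if_splits)

lemma sgn1_neg1: "a = b + 1 \<Longrightarrow> (sgn1 a :: 'k::comm_ring_1) = - sgn1 b"
  by (simp add: sgn1_p1)

lemma sgn1_eq2: "a = b + 2 * k \<Longrightarrow> (sgn1 a :: 'k::comm_ring_1) = sgn1 b"
  by (rule sgn1_cong) simp

locale Dm =
  fixes n m i :: nat
  assumes n3: "3 \<le> n" and m3: "3 \<le> m" and i1: "1 \<le> i" and im: "i \<le> m"
begin

definition sc :: nat where "sc = (if i < m then i + 1 else 1)"

lemma sc1: "1 \<le> sc" and scm: "sc \<le> m" and sci: "sc \<noteq> i"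
  using m3 i1 im by (auto simp: sc_def)

lemma Cs_i_sc: "Cs m i sc = {}"
  using m3 i1 im by (auto simp: sc_def Cs_def)

lemma Cs_i_c:
  assumes "1 \<le> c" "c \<le> m" "c \<noteq> i" "c \<noteq> sc"
  shows "Cs m i c = insert sc (Cs m sc c)"
  using assms m3 i1 im unfolding sc_def Cs_def by (auto split: if_splits)

lemma i_notin:
  assumes "1 \<le> c" "c \<le> m" "c \<noteq> i" "c \<noteq> sc"
  shows "i \<notin> Cs m sc c"
  using assms m3 i1 im unfolding sc_def Cs_def by (auto split: if_splits)

definition hh :: "path \<Rightarrow> path \<Rightarrow> 'k::comm_ring_1" where
  "hh p = (case p of g # g' # r \<Rightarrow>
      if g = (i, sc) \<and> fst g' = sc \<and> snd g' \<noteq> i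
      then (\<lambda>q. sgn1 (pdeg n r) * sgn1 (gdeg n (sc, snd g')) * dl ((i, snd g') # r) q)
      else (\<lambda>q. 0)
    | _ \<Rightarrow> (\<lambda>q. 0))"

definition wb :: "path \<Rightarrow> path \<Rightarrow> 'k::comm_ring_1" where
  "wb r = (\<lambda>q. dl ((i, sc) # (sc, i) # r) q -
      (\<Sum>y\<in>Cs m sc i. sgn1 (gdeg n (sc, y)) * dl ((i, y) # (y, i) # r) q))"

definition pp :: "path \<Rightarrow> path \<Rightarrow> 'k::comm_ring_1" where
  "pp p = (\<lambda>q. (if p = [] \<or> p = [(i, sc)] then dl p q else 0) +
      (case p of x # y # r \<Rightarrow> if x = (i, sc) \<and> y = (sc, i) then wb r q else 0 | _ \<Rightarrow> 0))"

lemma fin_hh[simp]: "fin (hh p)"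
  unfolding hh_def by (auto split: list.splits simp: mult.assoc fin_smult)

lemma lin_d_Cons:
  "lin f (dpath n m (g # r)) =
     (\<lambda>q. sgn1 (pdeg n r) * lin f (spl n m g r) q + lin (\<lambda>r. f (g # r)) (dpath n m r) q)"
  by (simp add: dpath_Cons lin_add fin_smult fin_pre lin_smult lin_pre)

lemma hh_first_not: "fst g = i \<Longrightarrow> snd g \<noteq> sc \<Longrightarrow> hh (g # r) = (\<lambda>q. 0)"
  unfolding hh_def by (cases g; cases r) auto

lemma H_c:
  assumes c: "1 \<le> c" "c \<le> m" "c \<noteq> i" "c \<noteq> sc"
  shows "(\<lambda>q. lin (dpath n m) (hh ((i,c) # r)) q + lin hh (dpath n m ((i,c) # r)) q)
       = (\<lambda>q. dl ((i,c) # r) q - (pp ((i,c) # r) q :: 'k::comm_ring_1))"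
proof
  fix q
  have h0: "hh ((i,c) # r) = (\<lambda>q. 0 :: 'k)" using c by (simp add: hh_first_not)
  have p0: "pp ((i,c) # r) q = (0 :: 'k)" using c
    by (cases r) (auto simp: pp_def)
  have l1: "lin (\<lambda>r. hh ((i,c) # r)) (dpath n m r) = (\<lambda>q. 0 :: 'k)"
    using c by (simp add: hh_first_not)
  have s: "(\<Sum>x\<in>Cs m i c. sgn1 (gdeg n (x, c)) * hh ((i, x) # (x, c) # r) q)
      = sgn1 (gdeg n (sc, c)) * (hh ((i, sc) # (sc, c) # r) q :: 'k)"
  proof -
    have "(\<Sum>x\<in>Cs m i c. sgn1 (gdeg n (x, c)) * hh ((i, x) # (x, c) # r) q)
        = (\<Sum>x\<in>insert sc (Cs m sc c). sgn1 (gdeg n (x, c)) * (hh ((i, x) # (x, c) # r) q :: 'k))"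
      using Cs_i_c[OF c] by simp
    also have "\<dots> = sgn1 (gdeg n (sc, c)) * hh ((i, sc) # (sc, c) # r) q"
      using Cs_not[of sc m sc c]
      by (subst sum.insert) (auto intro!: sum.neutral simp: hh_def dest: Cs_not)
    finally show ?thesis .
  qed
  have hv: "hh ((i, sc) # (sc, c) # r) q = sgn1 (pdeg n r) * sgn1 (gdeg n (sc, c)) * (dl ((i, c) # r) q :: 'k)"
    using c by (simp add: hh_def)
  show "lin (dpath n m) (hh ((i,c) # r)) q + lin hh (dpath n m ((i,c) # r)) q
       = dl ((i,c) # r) q - (pp ((i,c) # r) q :: 'k)"
    unfolding h0 lin_zero lin_d_Cons l1 lin_spl p0
    using s hv by (simp add: sgn1_mult2 sgn1_mult mult.assoc[symmetric] sgn1_ev)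
qed

lemma H_a: "(\<lambda>q. lin (dpath n m) (hh []) q + lin hh (dpath n m []) q)
       = (\<lambda>q. dl [] q - (pp [] q :: 'k::comm_ring_1))"
  by (simp add: hh_def pp_def)

lemma H_b: "(\<lambda>q. lin (dpath n m) (hh [(i,sc)]) q + lin hh (dpath n m [(i,sc)]) q)
       = (\<lambda>q. dl [(i,sc)] q - (pp [(i,sc)] q :: 'k::comm_ring_1))"
  by (simp add: hh_def pp_def lin_d_Cons lin_spl Cs_i_sc)

lemma H_e:
  "(\<lambda>q. lin (dpath n m) (hh ((i,sc) # (sc,i) # r)) q + lin hh (dpath n m ((i,sc) # (sc,i) # r)) q)
       = (\<lambda>q. dl ((i,sc) # (sc,i) # r) q - (pp ((i,sc) # (sc,i) # r) q :: 'k::comm_ring_1))"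
proof
  fix q
  have h0: "hh ((i,sc) # (sc,i) # r) = (\<lambda>q. 0 :: 'k)" by (simp add: hh_def)
  have l0: "lin (\<lambda>r'. hh ((i, sc) # (sc, i) # r')) (dpath n m r) = (\<lambda>q. 0 :: 'k)"
    by (simp add: hh_def)
  have hv: "y \<in> Cs m sc i \<Longrightarrow> hh ((i, sc) # (sc, y) # (y, i) # r) q =
      sgn1 (gdeg n (y, i) + pdeg n r) * sgn1 (gdeg n (sc, y)) * (dl ((i, y) # (y, i) # r) q :: 'k)" for y
    by (auto simp: hh_def dest: Cs_not)
  have co: "sgn1 (pdeg n r) * (sgn1 (gdeg n (y, i)) *
      (sgn1 (gdeg n (y, i) + pdeg n r) * sgn1 (gdeg n (sc, y)) * (X :: 'k)))
      = sgn1 (gdeg n (sc, y)) * X" for y X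
    by (simp add: sgn1_mult sgn1_mult2 mult.assoc[symmetric]) (rule arg_cong[where f="\<lambda>z. z * X"], rule sgn1_eq2[where k = "pdeg n r + gdeg n (y,i)"], simp)
  have "lin hh (dpath n m ((i,sc) # (sc,i) # r)) q =
     (\<Sum>y\<in>Cs m sc i. sgn1 (gdeg n (sc, y)) * (dl ((i, y) # (y, i) # r) q :: 'k))"
    unfolding lin_d_Cons lin_spl l0 using Cs_i_sc
    by (simp add: hv sum_distrib_left co cong: sum.cong)
  then show "lin (dpath n m) (hh ((i,sc) # (sc,i) # r)) q + lin hh (dpath n m ((i,sc) # (sc,i) # r)) q
       = dl ((i,sc) # (sc,i) # r) q - (pp ((i,sc) # (sc,i) # r) q :: 'k)"
    unfolding h0 by (simp add: pp_def wb_def)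
qed

lemma H_d:
  assumes c: "1 \<le> c" "c \<le> m" "c \<noteq> i" "c \<noteq> sc"
  shows "(\<lambda>q. lin (dpath n m) (hh ((i,sc) # (sc,c) # r)) q + lin hh (dpath n m ((i,sc) # (sc,c) # r)) q)
       = (\<lambda>q. dl ((i,sc) # (sc,c) # r) q - (pp ((i,sc) # (sc,c) # r) q :: 'k::comm_ring_1))"
proof
  fix q
  define S :: 'k where "S = sgn1 (pdeg n r) * sgn1 (gdeg n (sc, c))"
  define P :: 'k where "P = pre (i,c) (dpath n m r) q"
  define A where "A = (\<lambda>y. sgn1 (gdeg n (y, c)) * (dl ((i, y) # (y, c) # r) q :: 'k))"
  define B where "B = (\<lambda>y. sgn1 (gdeg n (y, c)) * (sgn1 (gdeg n (y, c) + pdeg n r) * sgn1 (gdeg n (sc, y))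
       * (dl ((i, y) # (y, c) # r) q :: 'k)))"
  have hp: "hh ((i,sc) # (sc,c) # r) = (\<lambda>q. S * (dl ((i, c) # r) q :: 'k))"
    using c by (simp add: hh_def S_def)
  have sp: "spl n m (i,c) r q = sgn1 (gdeg n (sc, c)) * dl ((i,sc) # (sc,c) # r) q + (\<Sum>y\<in>Cs m sc c. A y)"
  proof -
    have "sc \<notin> Cs m sc c" using Cs_not by blast
    then show ?thesis unfolding spl_def A_def using Cs_i_c[OF c] by simp
  qed
  have L1: "lin (dpath n m) (hh ((i,sc) # (sc,c) # r)) q = S * (sgn1 (pdeg n r) * spl n m (i,c) r q + P)"
    unfolding hp by (simp add: lin_smult dpath_Cons P_def)
  have hv: "y \<in> Cs m sc c \<Longrightarrow> hh ((i, sc) # (sc, y) # (y, c) # r) q =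
      sgn1 (gdeg n (y, c) + pdeg n r) * sgn1 (gdeg n (sc, y)) * (dl ((i, y) # (y, c) # r) q :: 'k)" for y
    using i_notin[OF c] by (auto simp: hh_def)
  have L3: "lin (\<lambda>r'. hh ((i,sc) # (sc,c) # r')) (dpath n m r) = (\<lambda>q. - S * pre (i,c) (dpath n m r) q :: 'k)"
  proof -
    have "lin (\<lambda>r'. hh ((i,sc) # (sc,c) # r')) (dpath n m r) =
          lin (\<lambda>r' q. - S * (dl ((i,c) # r') q :: 'k)) (dpath n m r)"
    proof (rule lin_cong)
      fix r' assume "(dpath n m r r' :: 'k) \<noteq> 0"
      then have "pdeg n r' = pdeg n r - 1" by (rule dpath_deg)
      then show "hh ((i,sc) # (sc,c) # r') = (\<lambda>q. - S * (dl ((i,c) # r') q :: 'k))"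
        using c by (simp add: hh_def S_def sgn1_m1)
    qed
    also have "\<dots> = (\<lambda>q. - S * pre (i,c) (dpath n m r) q)"
      apply (subst lin_fsmult)
      apply (subst lin_dl_pre)
       apply simp_all
      done
    finally show ?thesis .
  qed
  have L2: "lin hh (dpath n m ((i,sc) # (sc,c) # r)) q = sgn1 (pdeg n r) * (\<Sum>y\<in>Cs m sc c. B y) - S * P"
    unfolding lin_d_Cons lin_spl L3 using Cs_i_sc
    by (simp add: hv B_def P_def mult.assoc cong: sum.cong)
  have pp0: "pp ((i,sc) # (sc,c) # r) q = (0::'k)" using c by (simp add: pp_def)
  have one: "S * (sgn1 (pdeg n r) * sgn1 (gdeg n (sc, c))) = (1::'k)"
    unfolding S_def by (simp add: sgn1_mult sgn1_mult2 mult.assoc[symmetric] sgn1_ev)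
  have coef: "S * (sgn1 (pdeg n r) * A y) + sgn1 (pdeg n r) * B y = 0" if y: "y \<in> Cs m sc c" for y
  proof -
    have gs: "gdeg n (sc, c) = gdeg n (sc, y) + gdeg n (y, c) + 1" using gdeg_split[OF y] .
    show ?thesis unfolding S_def A_def B_def
      by (simp add: sgn1_mult sgn1_mult2 mult.assoc[symmetric] gs) (simp add: sgn1_def)
  qed
  have "S * (sgn1 (pdeg n r) * (\<Sum>y\<in>Cs m sc c. A y)) + sgn1 (pdeg n r) * (\<Sum>y\<in>Cs m sc c. B y)
      = (\<Sum>y\<in>Cs m sc c. S * (sgn1 (pdeg n r) * A y) + sgn1 (pdeg n r) * B y)"
    by (simp add: sum_distrib_left sum.distrib)
  also have "\<dots> = 0" using coef by (simp add: sum.neutral)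
  finally have z: "S * (sgn1 (pdeg n r) * (\<Sum>y\<in>Cs m sc c. A y)) + sgn1 (pdeg n r) * (\<Sum>y\<in>Cs m sc c. B y) = 0" .
  show "lin (dpath n m) (hh ((i,sc) # (sc,c) # r)) q + lin hh (dpath n m ((i,sc) # (sc,c) # r)) q
       = dl ((i,sc) # (sc,c) # r) q - (pp ((i,sc) # (sc,c) # r) q :: 'k)"
    unfolding L1 L2 pp0 sp
  proof -
    have "S * (sgn1 (pdeg n r) * (sgn1 (gdeg n (sc, c)) * dl ((i, sc) # (sc, c) # r) q + sum A (Cs m sc c)) + P) +
        (sgn1 (pdeg n r) * sum B (Cs m sc c) - S * P)
      = S * (sgn1 (pdeg n r) * sgn1 (gdeg n (sc, c))) * dl ((i, sc) # (sc, c) # r) q +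
        (S * (sgn1 (pdeg n r) * (\<Sum>y\<in>Cs m sc c. A y)) + sgn1 (pdeg n r) * (\<Sum>y\<in>Cs m sc c. B y))"
      by (simp add: algebra_simps)
    then show "S * (sgn1 (pdeg n r) * (sgn1 (gdeg n (sc, c)) * dl ((i, sc) # (sc, c) # r) q + sum A (Cs m sc c)) + P) +
        (sgn1 (pdeg n r) * sum B (Cs m sc c) - S * P) = dl ((i, sc) # (sc, c) # r) q - 0"
      using one z by simp
  qed
qed

end

lemma lin_d_Cons':
  "lin f (dpath n m (g # r)) =
     (\<lambda>q. sgn1 (pdeg n r) * lin f (spl n m g r) q + lin (\<lambda>r. f (g # r)) (dpath n m r) q)"
  by (simp add: dpath_Cons lin_add fin_smult fin_pre lin_smult lin_pre)

lemma pre_add: "pre g (\<lambda>q. A q + B q) = (\<lambda>q. pre g A q + pre g B q)"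
  by (auto simp: pre_def fun_eq_iff split: list.splits)

lemma pre_smult: "pre g (\<lambda>q. a * A q) = (\<lambda>q. a * pre g A q)"
  by (auto simp: pre_def fun_eq_iff split: list.splits)

lemma pre_sum: "pre g (\<lambda>q. \<Sum>x\<in>I. A x q) = (\<lambda>q. \<Sum>x\<in>I. pre g (A x) q)"
  by (auto simp: pre_def fun_eq_iff split: list.splits)

lemma pre_dl: "pre g (dl p) = dl (g # p)"
  by (auto simp: pre_def dl_def fun_eq_iff split: list.splits)

lemma pre_zero[simp]: "pre g (\<lambda>q. 0) = (\<lambda>q. 0)"
  by (auto simp: pre_def fun_eq_iff split: list.splits)

lemma lin_pre_out: "lin (\<lambda>p. pre g (f p)) c = pre g (lin f c)"
  by (auto simp: pre_def lin_def fun_eq_iff split: list.splits)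

lemma lin_fsum_f:
  "finite I \<Longrightarrow> lin (\<lambda>p q. \<Sum>x\<in>I. F x p q) c = (\<lambda>q. \<Sum>x\<in>I. lin (F x) c q)"
  unfolding lin_def by (simp add: sum_distrib_left fun_eq_iff; rule allI; rule sum.swap)

lemma lin_dl_pre2: "fin c \<Longrightarrow> lin (\<lambda>r. dl (u # v # r)) c = pre u (pre v c)"
proof -
  assume f: "fin c"
  have "lin (\<lambda>r. dl (u # r)) (lin (\<lambda>r. dl (v # r)) c) = lin (\<lambda>p. lin (\<lambda>r. dl (u # r)) (dl (v # p))) c"
    by (rule lin_comp[OF f]) simp
  then show ?thesis using f by (simp add: lin_dl_pre fin_pre)
qed

lemma lin_spl_c:
  assumes "fin c"
  shows "lin (spl n m (a,b)) c = (\<lambda>q. \<Sum>x\<in>Cs m a b. sgn1 (gdeg n (x, b)) * pre (a,x) (pre (x,b) c) q)"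
  unfolding spl_def
  by (simp add: lin_fsum_f lin_fsmult lin_dl_pre2[OF assms])

lemma Cs_swap:
  assumes "1 \<le> a" "a \<le> m" "1 \<le> b" "b \<le> m" "a \<noteq> b"
  shows "(x \<in> Cs m a b \<and> u \<in> Cs m a x) \<longleftrightarrow> (u \<in> Cs m a b \<and> x \<in> Cs m u b)"
  using assms unfolding Cs_def by (auto split: if_splits)

lemma sum_swap_Cs:
  assumes "1 \<le> a" "a \<le> m" "1 \<le> b" "b \<le> m" "a \<noteq> b"
  shows "(\<Sum>x\<in>Cs m a b. \<Sum>u\<in>Cs m a x. f u x) = (\<Sum>u\<in>Cs m a b. \<Sum>x\<in>Cs m u b. f u x)"
proof -
  have "(\<Sum>x\<in>Cs m a b. \<Sum>u\<in>Cs m a x. f u x) = (\<Sum>(x,u)\<in>Sigma (Cs m a b) (Cs m a). f u x)"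
    by (rule sum.Sigma) auto
  also have "\<dots> = (\<Sum>(u,x)\<in>Sigma (Cs m a b) (\<lambda>u. Cs m u b). f u x)"
    apply (rule sum.reindex_bij_witness[where i=prod.swap and j=prod.swap])
    using Cs_swap[OF assms] apply auto
     apply blast+
    done
  also have "\<dots> = (\<Sum>u\<in>Cs m a b. \<Sum>x\<in>Cs m u b. f u x)"
    by (rule sum.Sigma[symmetric]) auto
  finally show ?thesis .
qed

lemma DD: "vp m a p \<Longrightarrow> lin (dpath n m) (dpath n m p) = (\<lambda>q. 0 :: 'k::comm_ring_1)"
proof (induction p arbitrary: a)
  case Nil then show ?case by simp
next
  case (Cons g r)
  obtain b where g: "g = (a,b)" using Cons.prems by (cases g) auto
  have v: "1 \<le> a" "a \<le> m" "1 \<le> b" "b \<le> m" "a \<noteq> b" "vp m b r" using Cons.prems g by auto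
  have IH: "lin (dpath n m) (dpath n m r) = (\<lambda>q. 0 :: 'k)" using Cons.IH v(6) .
  show ?case
  proof
    fix q
    define D where "D = (\<lambda>u x. dl ((a,u) # (u,x) # (x,b) # r) q :: 'k)"
    have t1: "lin (dpath n m) (spl n m (a,b) r) q =
       (\<Sum>x\<in>Cs m a b. sgn1 (gdeg n (x, b)) * (sgn1 (gdeg n (x,b) + pdeg n r) *
          (\<Sum>u\<in>Cs m a x. sgn1 (gdeg n (u, x)) * D u x) +
          (sgn1 (pdeg n r) * (\<Sum>v\<in>Cs m x b. sgn1 (gdeg n (v, b)) * D x v) +
          pre (a,x) (pre (x,b) (dpath n m r)) q)))"
      unfolding lin_spl by (simp add: dpath_Cons pre_add pre_smult spl_def pre_sum pre_dl D_def)
    have t2: "lin (\<lambda>r'. dpath n m ((a,b) # r')) (dpath n m r :: path \<Rightarrow> 'k) q =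
       - sgn1 (pdeg n r) * (\<Sum>x\<in>Cs m a b. sgn1 (gdeg n (x, b)) * pre (a,x) (pre (x,b) (dpath n m r)) q)"
    proof -
      have "lin (\<lambda>r'. dpath n m ((a,b) # r')) (dpath n m r :: path \<Rightarrow> 'k) =
          lin (\<lambda>r' q. - sgn1 (pdeg n r) * spl n m (a,b) r' q + pre (a,b) (dpath n m r') q) (dpath n m r)"
      proof (rule lin_cong)
        fix r' assume "(dpath n m r r' :: 'k) \<noteq> 0"
        then have "pdeg n r' = pdeg n r - 1" by (rule dpath_deg)
        then show "dpath n m ((a,b) # r') = (\<lambda>q. - sgn1 (pdeg n r) * spl n m (a,b) r' q + pre (a,b) (dpath n m r') q :: 'k)"
          by (simp add: dpath_Cons sgn1_m1)
      qed
      also have "\<dots> = (\<lambda>q. - sgn1 (pdeg n r) * lin (spl n m (a,b)) (dpath n m r) q)"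
        by (subst lin_fadd, subst lin_fsmult, subst lin_pre_out) (simp add: IH)
      finally have X: "lin (\<lambda>r'. dpath n m ((a,b) # r')) (dpath n m r) =
         (\<lambda>q. - sgn1 (pdeg n r) * lin (spl n m (a,b)) (dpath n m r) q :: 'k)" .
      show ?thesis by (simp add: X lin_spl_c)
    qed
    have sw: "(\<Sum>x\<in>Cs m a b. \<Sum>u\<in>Cs m a x. sgn1 (gdeg n (u, x)) * D u x) =
              (\<Sum>u\<in>Cs m a b. \<Sum>x\<in>Cs m u b. sgn1 (gdeg n (u, x)) * D u x)"
      by (rule sum_swap_Cs[OF v(1-5)])
    have z: "(\<Sum>u\<in>Cs m a b. \<Sum>x\<in>Cs m u b. sgn1 (gdeg n (u, x)) * D u x) +
          (\<Sum>u\<in>Cs m a b. sgn1 (gdeg n (u, b)) * (\<Sum>x\<in>Cs m u b. sgn1 (gdeg n (x, b)) * D u x)) = 0"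
    proof -
      have h0: "\<And>u x. x \<in> Cs m u b \<Longrightarrow>
          (sgn1 (gdeg n (u, x)) :: 'k) + sgn1 (gdeg n (u, b)) * sgn1 (gdeg n (x, b)) = 0"
        by (drule gdeg_split[where n=n]) (simp add: sgn1_def)
      have "\<And>u x. x \<in> Cs m u b \<Longrightarrow>
          sgn1 (gdeg n (u, x)) * D u x + sgn1 (gdeg n (u, b)) * (sgn1 (gdeg n (x, b)) * D u x) = 0"
      proof -
        fix u x assume "x \<in> Cs m u b"
        then have "(sgn1 (gdeg n (u, x)) + sgn1 (gdeg n (u, b)) * sgn1 (gdeg n (x, b))) * D u x = 0"
          using h0 by simp
        then show "sgn1 (gdeg n (u, x)) * D u x + sgn1 (gdeg n (u, b)) * (sgn1 (gdeg n (x, b)) * D u x) = 0"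
          by (simp only: distrib_right mult.assoc)
      qed
      then show ?thesis
        by (simp add: sum_distrib_left sum.distrib[symmetric] sum.neutral)
    qed
    have "lin (dpath n m) (dpath n m ((a,b) # r) :: path \<Rightarrow> 'k) q =
        sgn1 (pdeg n r) * lin (dpath n m) (spl n m (a,b) r) q + lin (\<lambda>r'. dpath n m ((a,b) # r')) (dpath n m r) q"
      by (simp add: lin_d_Cons')
    also have "\<dots> = (\<Sum>x\<in>Cs m a b. \<Sum>u\<in>Cs m a x. sgn1 (gdeg n (u, x)) * D u x) +
          (\<Sum>u\<in>Cs m a b. sgn1 (gdeg n (u, b)) * (\<Sum>x\<in>Cs m u b. sgn1 (gdeg n (x, b)) * D u x))"
    proof -
      have e: "(sgn1 (pdeg n r) :: 'k) * (sgn1 (gdeg n (x, b)) * (sgn1 (gdeg n (x,b) + pdeg n r) * U + (sgn1 (pdeg n r) * V + P)))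
          = U + sgn1 (gdeg n (x, b)) * V + sgn1 (pdeg n r) * (sgn1 (gdeg n (x, b)) * P)" for x U V P
      proof -
        have s1: "(sgn1 (pdeg n r) :: 'k) * (sgn1 (gdeg n (x, b)) * sgn1 (gdeg n (x,b) + pdeg n r)) = 1"
          by (simp add: sgn1_mult sgn1_mult2 sgn1_ev)
        have s2: "(sgn1 (pdeg n r) :: 'k) * sgn1 (pdeg n r) = 1" by (rule sgn1_sq)
        have "(sgn1 (pdeg n r) :: 'k) * (sgn1 (gdeg n (x, b)) * (sgn1 (gdeg n (x,b) + pdeg n r) * U + (sgn1 (pdeg n r) * V + P)))
          = ((sgn1 (pdeg n r) :: 'k) * (sgn1 (gdeg n (x, b)) * sgn1 (gdeg n (x,b) + pdeg n r))) * U
            + (sgn1 (pdeg n r) * sgn1 (pdeg n r)) * (sgn1 (gdeg n (x, b)) * V) + sgn1 (pdeg n r) * (sgn1 (gdeg n (x, b)) * P)"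
          by (simp only: distrib_left mult.assoc mult.left_commute add.assoc)
        then show ?thesis by (simp only: s1 s2 mult_1_left)
      qed
      let ?U = "\<lambda>x. \<Sum>u\<in>Cs m a x. sgn1 (gdeg n (u, x)) * D u x"
      let ?V = "\<lambda>x. \<Sum>v\<in>Cs m x b. sgn1 (gdeg n (v, b)) * D x v"
      let ?P = "\<lambda>x. pre (a,x) (pre (x,b) (dpath n m r)) q"
      have f: "sgn1 (pdeg n r) * (\<Sum>x\<in>Cs m a b. sgn1 (gdeg n (x, b)) * (sgn1 (gdeg n (x,b) + pdeg n r) * ?U x + (sgn1 (pdeg n r) * ?V x + ?P x)))
        = (\<Sum>x\<in>Cs m a b. ?U x) + (\<Sum>x\<in>Cs m a b. sgn1 (gdeg n (x, b)) * ?V x) + sgn1 (pdeg n r) * (\<Sum>x\<in>Cs m a b. sgn1 (gdeg n (x, b)) * ?P x)"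
        apply (subst sum_distrib_left)
        apply (subst sum.cong[OF refl e])
        apply (simp only: sum.distrib sum_distrib_left)
        done
      show ?thesis unfolding t1 t2 f mult_minus_left
        by (simp only: add.assoc right_minus add_0_right)
    qed
    also have "\<dots> = 0" using sw z by simp
    finally show "(lin (dpath n m) (dpath n m (g # r)) q :: 'k) = 0" using g by simp
  qed
qed


lemma dpath_len: "(dpath n m p q :: 'k::comm_ring_1) \<noteq> 0 \<Longrightarrow> length q = Suc (length p)"
proof (rule ccontr)
  assume a: "(dpath n m p q :: 'k) \<noteq> 0" "length q \<noteq> Suc (length p)"
  then have "(dpath n m p q :: 'k) = 0" unfolding dpath_def by (intro sum.neutral) simp
  with a show False by simp
qed

lemma dpath_vp: "vp m a p \<Longrightarrow> (dpath n m p q :: 'k::comm_ring_1) \<noteq> 0 \<Longrightarrow> vp m a q \<and> endv a q = endv a p"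
proof (induction p arbitrary: a q)
  case Nil then show ?case by simp
next
  case (Cons g r)
  obtain b where g: "g = (a,b)" using Cons.prems by (cases g) auto
  have v: "1 \<le> a" "a \<le> m" "1 \<le> b" "b \<le> m" "a \<noteq> b" "vp m b r" using Cons.prems g by auto
  have "(spl n m g r q :: 'k) \<noteq> 0 \<or> (pre g (dpath n m r) q :: 'k) \<noteq> 0"
    using Cons.prems by (auto simp: dpath_Cons)
  then show ?case
  proof
    assume "(spl n m g r q :: 'k) \<noteq> 0"
    then obtain x where x: "x \<in> Cs m a b" "q = (a,x) # (x,b) # r" using spl_nz g by fastforce
    then show ?thesis using Cs_range[OF v(4) x(1)] Cs_not[OF x(1)] v g by auto
  next
    assume h: "(pre g (dpath n m r) q :: 'k) \<noteq> 0"
    then obtain q' where "q = g # q'" "(dpath n m r q' :: 'k) \<noteq> 0"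
      by (cases q) (auto simp: pre_def split: if_splits)
    then show ?thesis using Cons.IH[OF v(6)] v g by auto
  qed
qed

lemma dch_lin: "dch n m c = lin (dpath n m) c"
  by (simp add: dch_def lin_def csupp_def fun_eq_iff)

lemma gdeg_sum: "a \<noteq> b \<Longrightarrow> gdeg n (a,b) + gdeg n (b,a) = int n - 2"
  by (auto simp: gdeg_def)

lemma Ch_lin:
  assumes "fin c" "\<And>p. fin (f p)"
    and "\<And>p q. c p \<noteq> 0 \<Longrightarrow> f p q \<noteq> 0 \<Longrightarrow> P q"
  shows "lin f c q \<noteq> 0 \<Longrightarrow> P q"
  using csupp_lin[of f c] assms(3) by (auto simp: csupp_def)

lemma lin_cong2:
  assumes "fin c" "fin c'" "\<And>p. G p \<noteq> (\<lambda>q. 0) \<Longrightarrow> c p = c' p"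
  shows "lin G c = lin G c'"
proof
  fix q
  let ?S = "csupp c \<union> csupp c'"
  have fS: "finite ?S" using assms by (simp add: fin_def)
  have "lin G c q = (\<Sum>p\<in>?S. c p * G p q)" by (rule lin_sum) (use fS in auto)
  also have "\<dots> = (\<Sum>p\<in>?S. c' p * G p q)"
  proof (rule sum.cong[OF refl])
    fix p show "c p * G p q = c' p * G p q"
      using assms(3)[of p] by (cases "G p = (\<lambda>q. 0)") auto
  qed
  also have "\<dots> = lin G c' q" by (rule lin_sum[symmetric]) (use fS in auto)
  finally show "lin G c q = lin G c' q" .
qed

lemma lin_filter:
  assumes "fin c"
  shows "lin (\<lambda>p q. if P p then dl p q else 0) c = (\<lambda>q. if P q then c q else 0)"
proof
  fix q
  have "lin (\<lambda>p q. if P p then dl p q else 0) c = lin dl (\<lambda>q. if P q then c q else 0)"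
  proof -
    have f2: "fin (\<lambda>q. if P q then c q else 0)" using assms unfolding fin_def csupp_def
      by (rule finite_subset[rotated]) auto
    have "lin (\<lambda>p q. if P p then dl p q else 0) c = lin (\<lambda>p q. if P p then dl p q else 0) (\<lambda>q. if P q then c q else 0)"
      by (rule lin_cong2[OF assms f2]) (auto simp: fun_eq_iff)
    also have "\<dots> = lin dl (\<lambda>q. if P q then c q else 0)"
      by (rule lin_cong) (auto simp: fun_eq_iff split: if_splits)
    finally show ?thesis .
  qed
  also have "\<dots> = (\<lambda>q. if P q then c q else 0)"
    by (rule lin_id) (use assms in \<open>auto simp: fin_def csupp_def intro: finite_subset[rotated]\<close>)
  finally show "lin (\<lambda>p q. if P p then dl p q else 0) c q = (if P q then c q else 0)" by simp
qed

lemma lin_case2: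
  assumes "fin c"
  shows "lin (\<lambda>p q. case p of x # y # r \<Rightarrow> if x = u \<and> y = v then F r q else 0 | _ \<Rightarrow> 0) c
       = lin F (\<lambda>r. c (u # v # r))"
proof -
  let ?c' = "\<lambda>r. c (u # v # r)"
  have fc': "fin ?c'"
  proof -
    have "csupp ?c' \<subseteq> (\<lambda>p. drop 2 p) ` csupp c"
      by (auto simp: csupp_def image_iff intro!: exI[where x="u # v # _"])
    then show ?thesis using assms by (auto simp: fin_def intro: finite_subset)
  qed
  have "lin (\<lambda>p q. case p of x # y # r \<Rightarrow> if x = u \<and> y = v then F r q else 0 | _ \<Rightarrow> 0) c
      = lin (\<lambda>p q. case p of x # y # r \<Rightarrow> if x = u \<and> y = v then F r q else 0 | _ \<Rightarrow> 0) (pre u (pre v ?c'))"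
  proof (rule lin_cong2[OF assms fin_pre[OF fin_pre[OF fc']]])
    fix p assume "(\<lambda>q. case p of x # y # r \<Rightarrow> if x = u \<and> y = v then F r q else 0 | _ \<Rightarrow> 0) \<noteq> (\<lambda>q. 0)"
    note asm = this
    have "\<exists>r. p = u # v # r"
    proof (rule ccontr)
      assume "\<nexists>r. p = u # v # r"
      then have "(\<lambda>q. case p of x # y # r \<Rightarrow> if x = u \<and> y = v then F r q else 0 | _ \<Rightarrow> 0) = (\<lambda>q. 0)"
        by (auto split: list.split simp: fun_eq_iff)
      with asm show False by simp
    qed
    then obtain r where "p = u # v # r" by blast
    then show "c p = pre u (pre v ?c') p" by (simp add: pre_def)
  qed
  also have "\<dots> = lin F ?c'"
    by (simp add: lin_pre fin_pre fc')
  finally show ?thesis .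
qed

context Dm begin

definition ss :: "(path \<Rightarrow> 'k::comm_ring_1) \<Rightarrow> path \<Rightarrow> 'k" where
  "ss c = (\<lambda>r. c ((i,sc) # (sc,i) # r))"

definition WW :: "(path \<Rightarrow> 'k::comm_ring_1) \<Rightarrow> path \<Rightarrow> 'k" where
  "WW y = lin wb y"

definition PI :: "(path \<Rightarrow> 'k::comm_ring_1) \<Rightarrow> path \<Rightarrow> 'k" where
  "PI c = (\<lambda>q. (if q = [] \<or> q = [(i,sc)] then c q else 0) + WW (ss c) q)"

lemma fin_wb[simp]: "fin (wb r)"
  unfolding wb_def by (intro fin_diff fin_sum) auto

lemma fin_pp[simp]: "fin (pp p)"
proof -
  have f1: "fin (\<lambda>q. if p = [] \<or> p = [(i, sc)] then dl p q else (0::'k::comm_ring_1))"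
    by (cases "p = [] \<or> p = [(i, sc)]") auto
  have f2: "fin (\<lambda>q. case p of x # y # r \<Rightarrow> if x = (i, sc) \<and> y = (sc, i) then wb r q else (0::'k::comm_ring_1) | _ \<Rightarrow> 0)"
  proof (cases p)
    case Nil then show ?thesis by simp
  next
    case (Cons x p')
    then show ?thesis
    proof (cases p')
      case Nil then show ?thesis using Cons by simp
    next
      case (Cons y r)
      then show ?thesis using \<open>p = x # p'\<close> by (cases "x = (i, sc) \<and> y = (sc, i)") auto
    qed
  qed
  show ?thesis unfolding pp_def by (rule fin_add[OF f1 f2])
qed

lemma fin_ss: "fin c \<Longrightarrow> fin (ss c)"
proof -
  assume "fin c"
  have "csupp (ss c) \<subseteq> (\<lambda>p. drop 2 p) ` csupp c"
    by (auto simp: csupp_def ss_def image_iff intro!: exI[where x="_ # _ # _"])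
  then show ?thesis using \<open>fin c\<close> by (auto simp: fin_def intro: finite_subset)
qed

lemma fin_WW: "fin y \<Longrightarrow> fin (WW y)"
  unfolding WW_def by (rule fin_lin) auto

lemma lin_pp: "fin c \<Longrightarrow> lin pp c = PI c"
  unfolding pp_def PI_def WW_def ss_def
  by (simp add: lin_fadd lin_filter lin_case2)

definition Vc :: "(path \<Rightarrow> 'k::comm_ring_1) \<Rightarrow> bool" where
  "Vc c \<longleftrightarrow> (\<forall>p. c p \<noteq> 0 \<longrightarrow> vp m i p)"

lemma H_basis:
  assumes "vp m i p"
  shows "(\<lambda>q. lin (dpath n m) (hh p) q + lin hh (dpath n m p) q) = (\<lambda>q. dl p q - (pp p q :: 'k::comm_ring_1))"
proof (cases p)
  case Nil then show ?thesis using H_a by simp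
next
  case (Cons g r)
  obtain c where g: "g = (i,c)" using assms Cons by (cases g) auto
  have c: "1 \<le> c" "c \<le> m" "c \<noteq> i" "vp m c r" using assms Cons g by auto
  show ?thesis
  proof (cases "c = sc")
    case False
    then show ?thesis using H_c[OF c(1-3) False] Cons g by simp
  next
    case True
    show ?thesis
    proof (cases r)
      case Nil then show ?thesis using H_b Cons g True by simp
    next
      case (Cons g' r')
      obtain c' where g': "g' = (sc, c')" using c(4) Cons True by (cases g') auto
      have c': "1 \<le> c'" "c' \<le> m" "c' \<noteq> sc" using c(4) Cons g' True by auto
      show ?thesis
      proof (cases "c' = i")
        case True
        then show ?thesis using H_e \<open>p = g # r\<close> g \<open>c = sc\<close> Cons g' by simp
      next
        case False
        then show ?thesis using H_d[OF c'(1,2) False c'(3)] \<open>p = g # r\<close> g \<open>c = sc\<close> Cons g' by simp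
      qed
    qed
  qed
qed

lemma gdeg_i_sc: "gdeg n (i, sc) + gdeg n (sc, i) = int n - 2"
  using gdeg_sum sci by metis

lemma hh_vp:
  assumes "vp m i p" "(hh p q :: 'k::comm_ring_1) \<noteq> 0"
  shows "vp m i q \<and> endv i q = endv i p \<and> pdeg n q = pdeg n p + 1"
proof -
  obtain c r where p: "p = (i,sc) # (sc,c) # r" and cq: "q = (i,c) # r" and ci: "c \<noteq> i"
    using assms(2) unfolding hh_def dl_def
    by (auto split: list.splits if_splits)
  have v: "1 \<le> c" "c \<le> m" "c \<noteq> sc" "vp m c r" using assms(1) p by auto
  have "sc \<in> Cs m i c" using Cs_i_c[OF v(1,2) ci v(3)] by simp
  from gdeg_split[OF this, of n] show ?thesis using p cq v ci i1 im by auto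
qed

lemma pp_vp:
  assumes "vp m i p" "(pp p q :: 'k::comm_ring_1) \<noteq> 0"
  shows "vp m i q \<and> endv i q = endv i p \<and> pdeg n q = pdeg n p"
proof (cases "p = [] \<or> p = [(i,sc)]")
  case True
  then have "q = p" using assms(2) by (auto simp: pp_def dl_def split: if_splits)
  then show ?thesis using assms(1) by simp
next
  case False
  then obtain r where p: "p = (i,sc) # (sc,i) # r" and w: "(wb r q :: 'k) \<noteq> 0"
    using assms(2) unfolding pp_def by (auto split: list.splits if_splits)
  have vr: "vp m i r" using assms(1) p by auto
  have "q = (i,sc) # (sc,i) # r \<or> (\<exists>y\<in>Cs m sc i. q = (i,y) # (y,i) # r)"
  proof (rule ccontr)
    assume "\<not> ?thesis"
    then have "(wb r q :: 'k) = 0" unfolding wb_def dl_def by (auto intro!: sum.neutral)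
    with w show False by simp
  qed
  then show ?thesis
  proof
    assume "q = (i,sc) # (sc,i) # r"
    then show ?thesis using p assms(1) by simp
  next
    assume "\<exists>y\<in>Cs m sc i. q = (i,y) # (y,i) # r"
    then obtain y where y: "y \<in> Cs m sc i" "q = (i,y) # (y,i) # r" by blast
    have "1 \<le> y \<and> y \<le> m" using Cs_range[OF im y(1)] .
    moreover have "y \<noteq> i" using Cs_not[OF y(1)] by simp
    moreover have "gdeg n (i,y) + gdeg n (y,i) = int n - 2" using gdeg_sum \<open>y \<noteq> i\<close> by metis
    ultimately show ?thesis using y p vr i1 im gdeg_i_sc sc1 scm sci by auto
  qed
qed

lemma Vc_lin:
  assumes "fin c" "Vc c" "\<And>p. fin (f p)" "\<And>p q. vp m i p \<Longrightarrow> f p q \<noteq> 0 \<Longrightarrow> vp m i q"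
  shows "Vc (lin f c)"
  unfolding Vc_def
proof (intro allI impI)
  fix q assume "lin f c q \<noteq> 0"
  then have "q \<in> csupp (lin f c)" by (simp add: csupp_def)
  then have "q \<in> (\<Union>p\<in>csupp c. csupp (f p))" using csupp_lin by blast
  then obtain p where p: "c p \<noteq> 0" "f p q \<noteq> 0" by (auto simp: csupp_def)
  have "vp m i p" using assms(2) p(1) by (simp add: Vc_def)
  then show "vp m i q" using assms(4) p(2) by blast
qed

lemma Vc_hh: "fin c \<Longrightarrow> Vc c \<Longrightarrow> Vc (lin hh c)"
  by (rule Vc_lin) (auto dest: hh_vp)

lemma Vc_d: "fin c \<Longrightarrow> Vc c \<Longrightarrow> Vc (lin (dpath n m) c)"
  by (rule Vc_lin) (auto dest: dpath_vp)

lemma Vc_pp: "fin c \<Longrightarrow> Vc c \<Longrightarrow> Vc (lin pp c)"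
  by (rule Vc_lin) (auto dest: pp_vp)

lemma DD_chain: "fin c \<Longrightarrow> Vc c \<Longrightarrow> lin (dpath n m) (lin (dpath n m) c) = (\<lambda>q. 0 :: 'k::comm_ring_1)"
proof -
  assume f: "fin c" and v: "Vc c"
  have "lin (dpath n m) (lin (dpath n m) c) = lin (\<lambda>p. lin (dpath n m) (dpath n m p)) c"
    by (rule lin_comp[OF f]) simp
  also have "\<dots> = lin (\<lambda>p q. 0) c"
  proof (rule lin_cong)
    fix p assume "(c p :: 'k) \<noteq> 0"
    then have "vp m i p" using v by (simp add: Vc_def)
    then show "lin (dpath n m) (dpath n m p) = (\<lambda>q. 0 :: 'k)" by (rule DD)
  qed
  finally show ?thesis by simp
qed

lemma H_chain:
  assumes f: "fin c" and v: "Vc c"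
  shows "PI c = (\<lambda>q. c q - (lin (dpath n m) (lin hh c) q + lin hh (lin (dpath n m) c) q) :: 'k::comm_ring_1)"
proof -
  have "(\<lambda>q. lin (dpath n m) (lin hh c) q + lin hh (lin (dpath n m) c) q)
      = (\<lambda>q. lin (\<lambda>p. lin (dpath n m) (hh p)) c q + lin (\<lambda>p. lin hh (dpath n m p)) c q)"
    by (simp add: lin_comp[OF f])
  also have "\<dots> = lin (\<lambda>p q. lin (dpath n m) (hh p) q + lin hh (dpath n m p) q) c"
    by (simp add: lin_fadd)
  also have "\<dots> = lin (\<lambda>p q. dl p q - pp p q) c"
  proof (rule lin_cong)
    fix p assume "(c p :: 'k) \<noteq> 0"
    then have "vp m i p" using v by (simp add: Vc_def)
    then show "(\<lambda>q. lin (dpath n m) (hh p) q + lin hh (dpath n m p) q) = (\<lambda>q. dl p q - (pp p q :: 'k))"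
      by (rule H_basis)
  qed
  also have "\<dots> = (\<lambda>q. c q - PI c q)"
    by (simp add: lin_fdiff lin_id[OF f] lin_pp[OF f])
  finally show ?thesis by (simp add: fun_eq_iff algebra_simps)
qed

end

context Dm begin

abbreviation DD0 :: "(path \<Rightarrow> 'k::comm_ring_1) \<Rightarrow> path \<Rightarrow> 'k" where
  "DD0 c \<equiv> lin (dpath n m) c"

lemma fin_PI: "fin c \<Longrightarrow> fin (PI c)"
  by (simp add: lin_pp[symmetric] fin_lin)

lemma Vc_PI: "fin c \<Longrightarrow> Vc c \<Longrightarrow> Vc (PI c)"
  by (simp add: lin_pp[symmetric] Vc_pp)

lemma fin_DD0: "fin c \<Longrightarrow> fin (DD0 c)"
  by (rule fin_lin) auto

lemma fin_hhc: "fin c \<Longrightarrow> fin (lin hh c)"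
  by (rule fin_lin) auto

lemma dPI:
  assumes f: "fin c" and v: "Vc c"
  shows "DD0 (PI c) = PI (DD0 c :: path \<Rightarrow> 'k::comm_ring_1)"
proof -
  have fX: "fin (DD0 (lin hh c))" by (simp add: fin_DD0 fin_hhc f)
  have fY: "fin (lin hh (DD0 c))" by (simp add: fin_DD0 fin_hhc f)
  have Z1: "DD0 (DD0 (lin hh c)) = (\<lambda>q. 0)"
    by (rule DD_chain) (simp_all add: fin_hhc f Vc_hh v)
  have Z2: "DD0 (DD0 c) = (\<lambda>q. 0)" by (rule DD_chain[OF f v])
  have "DD0 (PI c) = DD0 (\<lambda>q. c q - (DD0 (lin hh c) q + lin hh (DD0 c) q))"
    by (simp add: H_chain[OF f v])
  also have "\<dots> = (\<lambda>q. DD0 c q - (DD0 (DD0 (lin hh c)) q + DD0 (lin hh (DD0 c)) q))"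
    by (simp add: lin_diff lin_add f fX fY fin_add)
  also have "\<dots> = (\<lambda>q. DD0 c q - DD0 (lin hh (DD0 c)) q)" by (simp add: Z1)
  also have "\<dots> = PI (DD0 c)"
    by (simp add: H_chain fin_DD0 f Vc_d v Z2)
  finally show ?thesis .
qed

lemma ss_WW: "fin y \<Longrightarrow> ss (WW y) = (y :: path \<Rightarrow> 'k::comm_ring_1)"
proof
  fix r assume f: "fin y"
  have w: "wb r' ((i,sc) # (sc,i) # r) = (dl r' r :: 'k)" for r'
  proof -
    have "(\<Sum>x\<in>Cs m sc i. sgn1 (gdeg n (sc, x)) * dl ((i, x) # (x, i) # r') ((i,sc) # (sc,i) # r)) = (0::'k)"
      by (rule sum.neutral) (auto simp: dl_def dest: Cs_not)
    then show ?thesis by (simp add: wb_def dl_def)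
  qed
  have "ss (WW y) r = lin dl y r" by (simp add: ss_def WW_def lin_def w)
  then show "ss (WW y) r = y r" by (simp add: lin_id[OF f])
qed

lemma wb_short: "length q < 2 \<Longrightarrow> wb r q = (0::'k::comm_ring_1)"
  unfolding wb_def dl_def by (auto intro!: sum.neutral)

lemma WW_short: "length q < 2 \<Longrightarrow> WW y q = (0::'k::comm_ring_1)"
  unfolding WW_def lin_def by (simp add: wb_short)

lemma PI_G: "fin y \<Longrightarrow> PI (pre (i,sc) (pre (sc,i) y)) = WW (y :: path \<Rightarrow> 'k::comm_ring_1)"
proof -
  assume f: "fin y"
  have s: "ss (pre (i,sc) (pre (sc,i) y)) = y" by (simp add: ss_def pre_def fun_eq_iff)
  have g0: "pre (i,sc) (pre (sc,i) y) [] = 0" "pre (i,sc) (pre (sc,i) y) [(i,sc)] = 0"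
    by (simp_all add: pre_def)
  show ?thesis by (rule ext) (auto simp: PI_def s g0)
qed

lemma Vc_G: "Vc y \<Longrightarrow> Vc (pre (i,sc) (pre (sc,i) y))"
  unfolding Vc_def pre_def using i1 im sc1 scm sci
  by (auto split: list.splits if_splits)

lemma WW_add: "fin a \<Longrightarrow> fin b \<Longrightarrow> WW (\<lambda>q. a q + b q) = (\<lambda>q. WW a q + WW b q)"
  by (simp add: WW_def lin_add)

lemma WW_smult: "fin a \<Longrightarrow> WW (\<lambda>q. c * a q) = (\<lambda>q. c * WW a q)"
  by (simp add: WW_def lin_smult)

lemma WW_zero[simp]: "WW (\<lambda>q. 0) = (\<lambda>q. 0)"
  by (simp add: WW_def)

lemma PI_add: "fin a \<Longrightarrow> fin b \<Longrightarrow> PI (\<lambda>q. a q + b q) = (\<lambda>q. PI a q + PI b q)"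
proof -
  assume fa: "fin a" and fb: "fin b"
  have s: "ss (\<lambda>q. a q + b q) = (\<lambda>q. ss a q + ss b q)" by (simp add: ss_def)
  show ?thesis by (rule ext) (simp add: PI_def s WW_add fin_ss fa fb)
qed

lemma d_G:
  assumes f: "fin y"
  shows "DD0 (pre (i,sc) (pre (sc,i) y)) =
    (\<lambda>q. pre (i,sc) (lin (\<lambda>r q. sgn1 (pdeg n r) * spl n m (sc,i) r q) y) q
         + pre (i,sc) (pre (sc,i) (DD0 y)) q :: 'k::comm_ring_1)"
proof -
  have sp0: "spl n m (i,sc) r = (\<lambda>q. 0 :: 'k)" for r by (simp add: spl_def Cs_i_sc fun_eq_iff)
  have e: "dpath n m ((i,sc) # (sc,i) # r) = (\<lambda>q. pre (i,sc) (\<lambda>q. sgn1 (pdeg n r) * spl n m (sc,i) r q) q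
         + pre (i,sc) (pre (sc,i) (dpath n m r)) q :: 'k)" for r
    by (simp add: dpath_Cons sp0 pre_add)
  have "DD0 (pre (i,sc) (pre (sc,i) y)) = lin (\<lambda>r. dpath n m ((i,sc) # (sc,i) # r)) y"
    by (simp add: lin_pre fin_pre f)
  also have "\<dots> = (\<lambda>q. lin (\<lambda>r. pre (i,sc) (\<lambda>q. sgn1 (pdeg n r) * spl n m (sc,i) r q)) y q
       + lin (\<lambda>r. pre (i,sc) (pre (sc,i) (dpath n m r))) y q)"
    by (simp only: e lin_fadd)
  also have "\<dots> = (\<lambda>q. pre (i,sc) (lin (\<lambda>r q. sgn1 (pdeg n r) * spl n m (sc,i) r q) y) q
         + pre (i,sc) (pre (sc,i) (DD0 y)) q)"
    by (simp only: lin_pre_out)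
  finally show ?thesis .
qed

lemma PI_X0:
  assumes f: "fin y"
  shows "PI (pre (i,sc) (lin (\<lambda>r q. sgn1 (pdeg n r) * spl n m (sc,i) r q) y)) = (\<lambda>q. 0 :: 'k::comm_ring_1)"
proof -
  let ?X = "lin (\<lambda>r q. sgn1 (pdeg n r) * spl n m (sc,i) r q) y :: path \<Rightarrow> 'k"
  have X0: "?X [] = 0" by (simp add: lin_def spl_def dl_def)
  have X1: "?X ((sc,i) # r) = 0" for r
  proof -
    have "spl n m (sc,i) r' ((sc,i) # r) = (0::'k)" for r'
      by (auto simp: spl_def dl_def intro!: sum.neutral dest: Cs_not)
    then show ?thesis by (simp add: lin_def)
  qed
  have s: "ss (pre (i,sc) ?X) = (\<lambda>q. 0)" by (simp add: ss_def pre_def X1 fun_eq_iff)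
  have g0: "pre (i,sc) ?X [] = 0" "pre (i,sc) ?X [(i,sc)] = 0"
    by (simp_all add: pre_def X0)
  show ?thesis by (rule ext) (auto simp: PI_def s g0)
qed

lemma fin_X: "fin y \<Longrightarrow> fin (lin (\<lambda>r q. sgn1 (pdeg n r) * spl n m (sc,i) r q) y :: path \<Rightarrow> 'k::comm_ring_1)"
  by (rule fin_lin) (auto intro: fin_smult)

lemma dWW:
  assumes f: "fin y" and v: "Vc y"
  shows "DD0 (WW y) = WW (DD0 y :: path \<Rightarrow> 'k::comm_ring_1)"
proof -
  have fG: "fin (pre (i,sc) (pre (sc,i) y))" by (simp add: fin_pre f)
  have "DD0 (WW y) = DD0 (PI (pre (i,sc) (pre (sc,i) y)))" by (simp add: PI_G f)
  also have "\<dots> = PI (DD0 (pre (i,sc) (pre (sc,i) y)))" by (rule dPI[OF fG Vc_G[OF v]])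
  also have "\<dots> = WW (DD0 y)"
    by (simp add: d_G f PI_add fin_pre fin_X fin_DD0 PI_X0 PI_G)
  finally show ?thesis .
qed

lemma ss_PI: "fin c \<Longrightarrow> ss (PI c) = ss (c :: path \<Rightarrow> 'k::comm_ring_1)"
proof -
  assume f: "fin c"
  have "ss (PI c) = ss (WW (ss c))" by (simp add: ss_def PI_def fun_eq_iff)
  then show ?thesis by (simp add: ss_WW fin_ss f)
qed

lemma Vc_ss: "Vc c \<Longrightarrow> Vc (ss c)"
  unfolding Vc_def ss_def by auto

lemma dpath_g1: "dpath n m [(i,sc)] = (\<lambda>q. 0 :: 'k::comm_ring_1)"
  by (simp add: dpath_Cons spl_def Cs_i_sc fun_eq_iff)

lemma ss_d:
  assumes f: "fin b" and v: "Vc b"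
  shows "ss (DD0 b) = DD0 (ss b :: path \<Rightarrow> 'k::comm_ring_1)"
proof -
  define B0 where "B0 = (\<lambda>q. if q = [] \<or> q = [(i,sc)] then b q else 0)"
  have B0e: "B0 = (\<lambda>q. b [] * dl [] q + b [(i,sc)] * dl [(i,sc)] q)"
    by (auto simp: B0_def dl_def fun_eq_iff)
  have fB0: "fin B0" unfolding B0e by (intro fin_add fin_smult) auto
  have dB0: "DD0 B0 = (\<lambda>q. 0)"
    unfolding B0e by (simp add: lin_add lin_smult fin_smult dpath_g1)
  have PIb: "PI b = (\<lambda>q. B0 q + WW (ss b) q)" by (simp add: PI_def B0_def)
  have "ss (DD0 b) = ss (PI (DD0 b))" by (simp add: ss_PI fin_DD0 f)
  also have "\<dots> = ss (DD0 (PI b))" by (simp add: dPI f v)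
  also have "\<dots> = ss (\<lambda>q. DD0 B0 q + DD0 (WW (ss b)) q)"
    by (simp add: PIb lin_add fB0 fin_WW fin_ss f)
  also have "\<dots> = ss (WW (DD0 (ss b)))"
    by (simp add: dB0 dWW fin_ss f Vc_ss v)
  also have "\<dots> = DD0 (ss b)" by (simp add: ss_WW fin_DD0 fin_ss f)
  finally show ?thesis .
qed

end

context Dm begin

definition Chn :: "nat \<Rightarrow> int \<Rightarrow> (path \<Rightarrow> 'k::comm_ring_1) \<Rightarrow> bool" where
  "Chn j d c \<longleftrightarrow> fin c \<and> (\<forall>p. c p \<noteq> 0 \<longrightarrow> vp m i p \<and> endv i p = j \<and> pdeg n p = d)"

lemma Chn_fin: "Chn j d c \<Longrightarrow> fin c" by (simp add: Chn_def)
lemma Chn_Vc: "Chn j d c \<Longrightarrow> Vc c" by (simp add: Chn_def Vc_def)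

lemma Chn_lin:
  assumes "Chn j d c" "\<And>p. fin (f p)"
    "\<And>p q. vp m i p \<Longrightarrow> endv i p = j \<Longrightarrow> pdeg n p = d \<Longrightarrow> f p q \<noteq> 0 \<Longrightarrow> vp m i q \<and> endv i q = j \<and> pdeg n q = d'"
  shows "Chn j d' (lin f c)"
proof -
  have f: "fin (lin f c)" using assms(1,2) by (simp add: Chn_def fin_lin)
  have "vp m i q \<and> endv i q = j \<and> pdeg n q = d'" if "lin f c q \<noteq> 0" for q
  proof -
    have "q \<in> csupp (lin f c)" using that by (simp add: csupp_def)
    then have "q \<in> (\<Union>p\<in>csupp c. csupp (f p))" using csupp_lin by blast
    then obtain p where p: "c p \<noteq> 0" "f p q \<noteq> 0" by (auto simp: csupp_def)
    have "vp m i p" "endv i p = j" "pdeg n p = d" using assms(1) p(1) by (auto simp: Chn_def)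
    then show "vp m i q \<and> endv i q = j \<and> pdeg n q = d'" using assms(3) p(2) by blast
  qed
  then show ?thesis using f by (simp add: Chn_def)
qed

lemma Chn_d: "Chn j d c \<Longrightarrow> Chn j (d - 1) (DD0 c)"
  by (rule Chn_lin) (auto dest: dpath_vp dpath_deg)

lemma Chn_hh: "Chn j d c \<Longrightarrow> Chn j (d + 1) (lin hh c)"
  by (rule Chn_lin) (auto dest: hh_vp)

lemma Chn_WW: "Chn j d (c :: path \<Rightarrow> 'k::comm_ring_1) \<Longrightarrow> Chn j (d + (int n - 2)) (WW c)"
  unfolding WW_def
proof (rule Chn_lin)
  fix p q assume a: "vp m i p" "endv i p = j" "pdeg n p = d" "(wb p q :: 'k) \<noteq> 0"
  have "(pp ((i,sc) # (sc,i) # p) q :: 'k) = wb p q" by (simp add: pp_def)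
  then have "(pp ((i,sc) # (sc,i) # p) q :: 'k) \<noteq> 0" using a(4) by simp
  moreover have "vp m i ((i,sc) # (sc,i) # p)" using a(1) i1 im sc1 scm sci by simp
  ultimately show "vp m i q \<and> endv i q = j \<and> pdeg n q = d + (int n - 2)"
    using pp_vp[of "(i,sc) # (sc,i) # p" q] a gdeg_i_sc by auto
qed auto

lemma Chn_ss: "Chn j d c \<Longrightarrow> Chn j (d - (int n - 2)) (ss c)"
  unfolding Chn_def using fin_ss gdeg_i_sc by (auto simp: ss_def)

lemma Chn_add: "Chn j d a \<Longrightarrow> Chn j d b \<Longrightarrow> Chn j d (\<lambda>q. a q + b q)"
  unfolding Chn_def by (auto intro: fin_add) (metis add.right_neutral)+

lemma Chn_smult: "Chn j d a \<Longrightarrow> Chn j d (\<lambda>q. c * a q)"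
  unfolding Chn_def by (metis fin_smult mult_zero_right)

lemma Chn_zero: "Chn j d (\<lambda>q. 0)" by (simp add: Chn_def)

lemma iterW_Chn: "Chn j d y \<Longrightarrow> Chn j (d + int k * (int n - 2)) ((WW ^^ k) y)"
proof (induction k)
  case 0 then show ?case by simp
next
  case (Suc k)
  then show ?case using Chn_WW[OF Suc.IH[OF Suc.prems]] by (simp add: algebra_simps)
qed

lemma iterW_cycle: "Chn j d y \<Longrightarrow> DD0 y = (\<lambda>q. 0) \<Longrightarrow> DD0 ((WW ^^ k) y) = (\<lambda>q. 0 :: 'k::comm_ring_1)"
proof (induction k)
  case 0 then show ?case by simp
next
  case (Suc k)
  have "Chn j (d + int k * (int n - 2)) ((WW ^^ k) y)" by (rule iterW_Chn[OF Suc.prems(1)])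
  then show ?case using Suc by (simp add: dWW Chn_fin Chn_Vc)
qed

lemma Chn_dl0: "Chn i 0 (dl [])" by (simp add: Chn_def) (simp add: dl_def)
lemma Chn_dl1: "Chn sc (gdeg n (i,sc)) (dl [(i,sc)])"
  using i1 im sc1 scm sci by (simp add: Chn_def) (simp add: dl_def)

lemma DD0_dl0: "DD0 (dl []) = (\<lambda>q. 0)" by simp
lemma DD0_dl1: "DD0 (dl [(i,sc)]) = (\<lambda>q. 0)" by (simp add: dpath_g1)

definition ZZ :: "nat \<Rightarrow> int \<Rightarrow> path \<Rightarrow> 'k::comm_ring_1" where
  "ZZ j d = (if j = i \<and> 0 \<le> d \<and> (int n - 2) dvd d then (WW ^^ nat (d div (int n - 2))) (dl [])
    else if j = sc \<and> gdeg n (i,sc) \<le> d \<and> (int n - 2) dvd (d - gdeg n (i,sc))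
    then (WW ^^ nat ((d - gdeg n (i,sc)) div (int n - 2))) (dl [(i,sc)]) else (\<lambda>q. 0))"

lemma n2: "int n - 2 > 0" using n3 by simp

lemma ZZ_Chn: "Chn j d (ZZ j d)"
proof -
  have A: "Chn i d ((WW ^^ nat (d div (int n - 2))) (dl []))" if A1: "0 \<le> d" and A2: "(int n - 2) dvd d"
  proof -
    obtain k where k: "d = (int n - 2) * k" using A2 by (elim dvdE)
    have "k \<ge> 0" using k A1 n2 by (simp add: zero_le_mult_iff)
    then have "d = 0 + int (nat (d div (int n - 2))) * (int n - 2)" using k n2 by simp
    then show ?thesis using iterW_Chn[OF Chn_dl0, of "nat (d div (int n - 2))"] by simp
  qed
  have B: "Chn sc d ((WW ^^ nat ((d - gdeg n (i,sc)) div (int n - 2))) (dl [(i,sc)]))"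
    if B1: "gdeg n (i,sc) \<le> d" and B2: "(int n - 2) dvd (d - gdeg n (i,sc))"
  proof -
    obtain k where k: "d - gdeg n (i,sc) = (int n - 2) * k" using B2 by (elim dvdE)
    have "0 \<le> (int n - 2) * k" using k B1 by simp
    then have "k \<ge> 0" using n2 by (simp add: zero_le_mult_iff)
    moreover have "d = gdeg n (i,sc) + (int n - 2) * k" using k by linarith
    ultimately have "d = gdeg n (i,sc) + int (nat ((d - gdeg n (i,sc)) div (int n - 2))) * (int n - 2)"
      using k n2 by (simp add: mult.commute)
    then show ?thesis using iterW_Chn[OF Chn_dl1, of "nat ((d - gdeg n (i,sc)) div (int n - 2))"] by simp
  qed
  show ?thesis unfolding ZZ_def using A B Chn_zero by auto
qed

lemma ZZ_cycle: "DD0 (ZZ j d) = (\<lambda>q. 0 :: 'k::comm_ring_1)"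
  unfolding ZZ_def
  using iterW_cycle[OF Chn_dl0 DD0_dl0] iterW_cycle[OF Chn_dl1 DD0_dl1] by auto

lemma dvd_sub_self: "(a::int) dvd (x - a) \<Longrightarrow> a dvd x"
  by (metis diff_add_cancel dvd_add dvd_refl)

lemma step_arith:
  assumes N: "(N::int) > 0" and x: "0 \<le> x" "N dvd x" "x \<noteq> 0"
  shows "0 \<le> x - N" "N dvd (x - N)" "nat (x div N) = Suc (nat ((x - N) div N))"
proof -
  obtain k where k: "x = N * k" using x(2) by (elim dvdE)
  have "k \<ge> 0" using k x(1) N by (simp add: zero_le_mult_iff)
  moreover have "k \<noteq> 0" using k x(3) by auto
  ultimately have k1: "k \<ge> 1" by simp
  have e: "x - N = N * (k - 1)" using k by (simp add: algebra_simps)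
  show "0 \<le> x - N" using e k1 N by simp
  show "N dvd (x - N)" using e by simp
  have "x div N = k" using k N by simp
  moreover have "(x - N) div N = k - 1" using e N by simp
  ultimately show "nat (x div N) = Suc (nat ((x - N) div N))" using k1 by (simp add: nat_diff_distrib')
qed

lemma step_arith2:
  assumes N: "(N::int) > 0" and x: "\<not> (0 \<le> x \<and> N dvd x)"
  shows "\<not> (0 \<le> x - N \<and> N dvd (x - N))"
  using x N dvd_sub_self[of N x] by auto

lemma ZZ_step:
  assumes "\<not> (j = i \<and> d = 0)" "\<not> (j = sc \<and> d = gdeg n (i,sc))"
  shows "ZZ j d = WW (ZZ j (d - (int n - 2)) :: path \<Rightarrow> 'k::comm_ring_1)"
proof -
  have np: "int n - 2 > 0" by (rule n2)
  show ?thesis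
  proof (cases "j = i")
    case True
    then have "j \<noteq> sc" using sci by simp
    show ?thesis
    proof (cases "0 \<le> d \<and> (int n - 2) dvd d")
      case c: True
      then have "d \<noteq> 0" using assms True by auto
      then have d1: "0 \<le> d - (int n - 2)" "(int n - 2) dvd (d - (int n - 2))"
        "nat (d div (int n - 2)) = Suc (nat ((d - (int n - 2)) div (int n - 2)))"
        using step_arith[OF np] c by auto
      then show ?thesis using True c d1 \<open>j \<noteq> sc\<close> by (simp add: ZZ_def)
    next
      case c: False
      then have "\<not> (0 \<le> d - (int n - 2) \<and> (int n - 2) dvd (d - (int n - 2)))"
        by (rule step_arith2[OF np])
      then have c1: "\<not> (j = i \<and> 0 \<le> d - (int n - 2) \<and> (int n - 2) dvd (d - (int n - 2)))" by simp
      have c2: "\<not> (j = sc \<and> gdeg n (i,sc) \<le> d - (int n - 2) \<and> (int n - 2) dvd (d - (int n - 2) - gdeg n (i,sc)))"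
        using \<open>j \<noteq> sc\<close> by simp
      have c3: "\<not> (j = i \<and> 0 \<le> d \<and> (int n - 2) dvd d)" using c by simp
      have c4: "\<not> (j = sc \<and> gdeg n (i,sc) \<le> d \<and> (int n - 2) dvd (d - gdeg n (i,sc)))"
        using \<open>j \<noteq> sc\<close> by simp
      have "ZZ j (d - (int n - 2)) = (\<lambda>q. 0 :: 'k)"
        unfolding ZZ_def by (subst if_not_P[OF c1], subst if_not_P[OF c2], rule refl)
      moreover have "ZZ j d = (\<lambda>q. 0 :: 'k)"
        unfolding ZZ_def by (subst if_not_P[OF c3], subst if_not_P[OF c4], rule refl)
      ultimately show ?thesis by simp
    qed
  next
    case False
    show ?thesis
    proof (cases "j = sc")
      case True
      let ?e = "gdeg n (i,sc)"
      show ?thesis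
      proof (cases "?e \<le> d \<and> (int n - 2) dvd (d - ?e)")
        case c: True
        then have "d \<noteq> ?e" using assms True by auto
        have ee: "d - (int n - 2) - ?e = (d - ?e) - (int n - 2)" by simp
        have "0 \<le> d - ?e" "(int n - 2) dvd (d - ?e)" "d - ?e \<noteq> 0" using c \<open>d \<noteq> ?e\<close> by auto
        note sa = step_arith[OF np this]
        have d1: "?e \<le> d - (int n - 2)" "(int n - 2) dvd (d - (int n - 2) - ?e)"
          using sa(1,2) unfolding ee by auto
        have "nat ((d - ?e) div (int n - 2)) = Suc (nat ((d - (int n - 2) - ?e) div (int n - 2)))"
          using sa(3) unfolding ee .
        then show ?thesis using True c d1 False by (simp add: ZZ_def)
      next
        case c: False
        have ee: "d - (int n - 2) - ?e = (d - ?e) - (int n - 2)" by simp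
        have "\<not> (0 \<le> d - ?e \<and> (int n - 2) dvd (d - ?e))" using c by auto
        from step_arith2[OF np this]
        have "\<not> (?e \<le> d - (int n - 2) \<and> (int n - 2) dvd (d - (int n - 2) - ?e))"
          unfolding ee by auto
        then have c2: "\<not> (j = sc \<and> gdeg n (i,sc) \<le> d - (int n - 2) \<and> (int n - 2) dvd (d - (int n - 2) - gdeg n (i,sc)))"
          by simp
        have c1: "\<not> (j = i \<and> 0 \<le> d - (int n - 2) \<and> (int n - 2) dvd (d - (int n - 2)))" using False by simp
        have c3: "\<not> (j = i \<and> 0 \<le> d \<and> (int n - 2) dvd d)" using False by simp
        have c4: "\<not> (j = sc \<and> gdeg n (i,sc) \<le> d \<and> (int n - 2) dvd (d - gdeg n (i,sc)))"
          using c by simp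
        have "ZZ j (d - (int n - 2)) = (\<lambda>q. 0 :: 'k)"
          unfolding ZZ_def by (subst if_not_P[OF c1], subst if_not_P[OF c2], rule refl)
        moreover have "ZZ j d = (\<lambda>q. 0 :: 'k)"
          unfolding ZZ_def by (subst if_not_P[OF c3], subst if_not_P[OF c4], rule refl)
        ultimately show ?thesis by simp
      qed
    next
      case False2: False
      then show ?thesis using False by (simp add: ZZ_def)
    qed
  qed
qed

end

lemma chains_fin: "c \<in> chains n m i j d \<Longrightarrow> fin c"
  by (simp add: chains_def fin_def csupp_def)

lemma chains_add: "a \<in> chains n m i j d \<Longrightarrow> b \<in> chains n m i j d \<Longrightarrow> (\<lambda>q. a q + b q) \<in> chains n m i j d"
proof -
  assume a: "a \<in> chains n m i j d" and b: "b \<in> chains n m i j d"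
  have "fin (\<lambda>q. a q + b q)" using chains_fin[OF a] chains_fin[OF b] by (rule fin_add)
  moreover have "a p + b p \<noteq> 0 \<Longrightarrow> is_path m i j p \<and> pdeg n p = d" for p
    using a b unfolding chains_def by (cases "a p = 0") auto
  ultimately show ?thesis by (simp add: chains_def fin_def csupp_def)
qed

lemma chains_smult: "a \<in> chains n m i j d \<Longrightarrow> (\<lambda>q. x * a q) \<in> chains n m i j d"
proof -
  assume a: "a \<in> chains n m i j d"
  have "fin (\<lambda>q. x * a q)" using chains_fin[OF a] by (rule fin_smult)
  moreover have "x * a p \<noteq> 0 \<Longrightarrow> is_path m i j p \<and> pdeg n p = d" for p
    using a unfolding chains_def by (cases "a p = 0") auto
  ultimately show ?thesis by (simp add: chains_def fin_def csupp_def)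
qed

lemma chains_zero: "(\<lambda>q. 0) \<in> chains n m i j d"
  by (simp add: chains_def)

lemma dch_add: "a \<in> chains n m i j d \<Longrightarrow> b \<in> chains n m i j d \<Longrightarrow>
    dch n m (\<lambda>q. a q + b q) = (\<lambda>q. dch n m a q + dch n m b q)"
  by (simp add: dch_lin lin_add chains_fin)

lemma dch_smult: "a \<in> chains n m i j d \<Longrightarrow> dch n m (\<lambda>q. x * a q) = (\<lambda>q. x * dch n m a q)"
  by (simp add: dch_lin lin_smult chains_fin)

lemma dch_zero: "dch n m (\<lambda>q. 0) = (\<lambda>q. 0)"
  by (simp add: dch_lin)

lemma B_add: "x \<in> boundaries n m i j d \<Longrightarrow> y \<in> boundaries n m i j d \<Longrightarrow> (\<lambda>q. x q + y q) \<in> boundaries n m i j d"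
proof -
  assume "x \<in> boundaries n m i j d" "y \<in> boundaries n m i j d"
  then obtain a b where a: "a \<in> chains n m i j (d+1)" "x = dch n m a" and b: "b \<in> chains n m i j (d+1)" "y = dch n m b"
    unfolding boundaries_def by blast
  have "(\<lambda>q. x q + y q) = dch n m (\<lambda>q. a q + b q)" using a b dch_add[OF a(1) b(1)] by simp
  then show ?thesis unfolding boundaries_def using chains_add[OF a(1) b(1)] by blast
qed

lemma B_smult: "x \<in> boundaries n m i j d \<Longrightarrow> (\<lambda>q. c * x q) \<in> boundaries n m i j d"
proof -
  assume "x \<in> boundaries n m i j d"
  then obtain a where a: "a \<in> chains n m i j (d+1)" "x = dch n m a"
    unfolding boundaries_def by blast
  have "(\<lambda>q. c * x q) = dch n m (\<lambda>q. c * a q)" using a dch_smult[OF a(1)] by simp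
  then show ?thesis unfolding boundaries_def using chains_smult[OF a(1)] by blast
qed

lemma B_zero: "(\<lambda>q. 0) \<in> boundaries n m i j d"
  unfolding boundaries_def
proof (rule image_eqI)
  show "(\<lambda>q. 0) = dch n m (\<lambda>q. 0)" by (simp add: dch_zero)
  show "(\<lambda>q. 0) \<in> chains n m i j (d + 1)" by (rule chains_zero)
qed

lemma B_diff: "x \<in> boundaries n m i j d \<Longrightarrow> y \<in> boundaries n m i j d \<Longrightarrow> (\<lambda>q. x q - y q) \<in> boundaries n m i j d"
proof -
  assume x: "x \<in> boundaries n m i j d" and y: "y \<in> boundaries n m i j d"
  have "(\<lambda>q. (-1) * y q) \<in> boundaries n m i j d" by (rule B_smult[OF y])
  from B_add[OF x this] have "(\<lambda>q. x q + (-1) * y q) \<in> boundaries n m i j d" .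
  moreover have "(\<lambda>q. x q + (-1) * y q) = (\<lambda>q. x q - y q)" by (rule ext) simp
  ultimately show ?thesis by simp
qed

lemma coset_eq:
  "(coset (boundaries n m i j d) c = coset (boundaries n m i j d) c') \<longleftrightarrow> (\<lambda>q. c q - c' q) \<in> boundaries n m i j d"
  (is "?L \<longleftrightarrow> ?R")
proof
  assume ?L
  have "c \<in> coset (boundaries n m i j d) c"
    unfolding coset_def using B_zero[of n m i j d] by force
  then have "c \<in> coset (boundaries n m i j d) c'" using \<open>?L\<close> by simp
  then obtain b where b: "b \<in> boundaries n m i j d" "c = (\<lambda>q. c' q + b q)" unfolding coset_def by blast
  then have "(\<lambda>q. c q - c' q) = b" by auto
  then show ?R using b by simp
next
  assume r: ?R
  show ?L
  proof
    show "coset (boundaries n m i j d) c \<subseteq> coset (boundaries n m i j d) c'"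
    proof
      fix x assume "x \<in> coset (boundaries n m i j d) c"
      then obtain b where b: "b \<in> boundaries n m i j d" "x = (\<lambda>q. c q + b q)" unfolding coset_def by blast
      have m1: "(\<lambda>q. (c q - c' q) + b q) \<in> boundaries n m i j d" using B_add[OF r b(1)] by simp
      have m2: "x = (\<lambda>q. c' q + ((c q - c' q) + b q))" using b by auto
      show "x \<in> coset (boundaries n m i j d) c'" unfolding coset_def
        by (rule CollectI, rule exI[where x="\<lambda>q. (c q - c' q) + b q"]) (use m1 m2 in simp)
    qed
  next
    show "coset (boundaries n m i j d) c' \<subseteq> coset (boundaries n m i j d) c"
    proof
      fix x assume "x \<in> coset (boundaries n m i j d) c'"
      then obtain b where b: "b \<in> boundaries n m i j d" "x = (\<lambda>q. c' q + b q)" unfolding coset_def by blast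
      have m1: "(\<lambda>q. b q - (c q - c' q)) \<in> boundaries n m i j d" using B_diff[OF b(1) r] by simp
      have m2: "x = (\<lambda>q. c q + (b q - (c q - c' q)))" using b by auto
      show "x \<in> coset (boundaries n m i j d) c" unfolding coset_def
        by (rule CollectI, rule exI[where x="\<lambda>q. b q - (c q - c' q)"]) (use m1 m2 in simp)
    qed
  qed
qed

lemma cycles_smult: "a \<in> cycles n m i j d \<Longrightarrow> (\<lambda>q. x * a q) \<in> cycles n m i j d"
proof -
  assume "a \<in> cycles n m i j d"
  then have a: "a \<in> chains n m i j d" "\<And>q. dch n m a q = 0" unfolding cycles_def by auto
  have "dch n m (\<lambda>q. x * a q) = (\<lambda>q. x * dch n m a q)" by (rule dch_smult[OF a(1)])
  then have "\<forall>q. dch n m (\<lambda>q. x * a q) q = 0" using a(2) by simp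
  then show ?thesis unfolding cycles_def using chains_smult[OF a(1)] by blast
qed

lemma cycles_zero: "(\<lambda>q. 0 :: 'k::comm_ring_1) \<in> cycles n m i j d"
proof -
  have "\<forall>q. dch n m (\<lambda>q. 0 :: 'k::comm_ring_1) q = 0" by (simp add: dch_zero)
  then show ?thesis unfolding cycles_def using chains_zero by blast
qed

lemma iso_zero:
  assumes "\<And>c :: path \<Rightarrow> 'k::comm_ring_1. c \<in> cycles n m i j d \<Longrightarrow> c \<in> boundaries n m i j d"
  shows "homology_iso n m i j d ({0} :: 'k set)"
proof -
  let ?B = "boundaries n m i j d :: (path \<Rightarrow> 'k) set"
  have "homology n m i j d = {coset ?B (\<lambda>q. 0)}"
  proof
    show "homology n m i j d \<subseteq> {coset ?B (\<lambda>q. 0)}"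
    proof
      fix X :: "(path \<Rightarrow> 'k) set" assume "X \<in> homology n m i j d"
      then obtain c where c: "c \<in> cycles n m i j d" "X = coset ?B c" unfolding homology_def by blast
      have "(\<lambda>q. c q - 0) \<in> ?B" using assms[OF c(1)] by simp
      then have "coset ?B c = coset ?B (\<lambda>q. 0)" by (simp only: coset_eq)
      then show "X \<in> {coset ?B (\<lambda>q. 0)}" using c by simp
    qed
    show "{coset ?B (\<lambda>q. 0)} \<subseteq> homology n m i j d"
      unfolding homology_def using cycles_zero by blast
  qed
  then show ?thesis unfolding homology_iso_def
    by (intro exI[where x="\<lambda>X. 0"]) (auto simp: bij_betw_def)
qed

lemma iso_UNIV:
  fixes z :: "path \<Rightarrow> 'k::comm_ring_1"
  assumes z: "z \<in> cycles n m i j d"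
    and dec: "\<And>c. c \<in> cycles n m i j d \<Longrightarrow> \<exists>a. (\<lambda>q. c q - a * z q) \<in> boundaries n m i j d"
    and nb: "\<And>a. (\<lambda>q. a * z q) \<in> boundaries n m i j d \<Longrightarrow> a = 0"
  shows "homology_iso n m i j d (UNIV :: 'k set)"
proof -
  let ?B = "boundaries n m i j d :: (path \<Rightarrow> 'k) set"
  define \<psi> where "\<psi> = (\<lambda>X. SOME a. X = coset ?B (\<lambda>q. a * z q))"
  have uniq: "a = a'" if "coset ?B (\<lambda>q. a * z q) = coset ?B (\<lambda>q. a' * z q)" for a a'
  proof -
    have "(\<lambda>q. a * z q - a' * z q) \<in> ?B" using that by (simp add: coset_eq)
    then have "(\<lambda>q. (a - a') * z q) \<in> ?B" by (simp add: algebra_simps)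
    then show ?thesis using nb by fastforce
  qed
  have psi_val: "\<psi> (coset ?B (\<lambda>q. a * z q)) = a" for a
    unfolding \<psi>_def by (rule some_equality) (auto dest: uniq)
  have psi_c: "\<psi> (coset ?B c) = a" if "(\<lambda>q. c q - a * z q) \<in> ?B" for c a
    using that psi_val by (simp add: coset_eq[symmetric])
  have inj: "inj_on \<psi> (homology n m i j d)"
  proof
    fix X Y assume X: "X \<in> homology n m i j d" and Y: "Y \<in> homology n m i j d" and e: "\<psi> X = \<psi> Y"
    obtain c where c: "c \<in> cycles n m i j d" "X = coset ?B c" using X unfolding homology_def by blast
    obtain c' where c': "c' \<in> cycles n m i j d" "Y = coset ?B c'" using Y unfolding homology_def by blast
    obtain a where a: "(\<lambda>q. c q - a * z q) \<in> ?B" using dec[OF c(1)] by blast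
    obtain a' where a': "(\<lambda>q. c' q - a' * z q) \<in> ?B" using dec[OF c'(1)] by blast
    have "a = a'" using e c c' psi_c[OF a] psi_c[OF a'] by simp
    then show "X = Y" using c c' a a' by (simp add: coset_eq[symmetric])
  qed
  have img: "\<psi> ` homology n m i j d = UNIV"
  proof (rule set_eqI, rule iffI)
    fix a :: 'k assume "a \<in> UNIV"
    have "coset ?B (\<lambda>q. a * z q) \<in> homology n m i j d"
      unfolding homology_def using cycles_smult[OF z] by blast
    then show "a \<in> \<psi> ` homology n m i j d" using psi_val by (metis image_eqI)
  qed auto
  have add: "\<psi> (coset ?B (\<lambda>q. c q + c' q)) = \<psi> (coset ?B c) + \<psi> (coset ?B c')"
    if c1: "c \<in> cycles n m i j d" and c2: "c' \<in> cycles n m i j d" for c c'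
  proof -
    obtain a where a: "(\<lambda>q. c q - a * z q) \<in> ?B" using dec[OF c1] by blast
    obtain a' where a': "(\<lambda>q. c' q - a' * z q) \<in> ?B" using dec[OF c2] by blast
    have "(\<lambda>q. (c q + c' q) - (a + a') * z q) \<in> ?B"
      using B_add[OF a a'] by (simp add: algebra_simps)
    then show ?thesis using psi_c[OF a] psi_c[OF a'] psi_c by simp
  qed
  have smul: "\<psi> (coset ?B (\<lambda>q. x * c q)) = x * \<psi> (coset ?B c)"
    if c1: "c \<in> cycles n m i j d" for c x
  proof -
    obtain a where a: "(\<lambda>q. c q - a * z q) \<in> ?B" using dec[OF c1] by blast
    have "(\<lambda>q. x * c q - (x * a) * z q) \<in> ?B"
      using B_smult[OF a, of x] by (simp add: algebra_simps)
    then show ?thesis using psi_c[OF a] psi_c by simp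
  qed
  show ?thesis unfolding homology_iso_def
    using inj img add smul by (intro exI[where x=\<psi>]) (auto simp: bij_betw_def)
qed


context Dm begin

lemma chains_Chn: "(c \<in> chains n m i j d) = Chn j d c"
  unfolding chains_def Chn_def fin_def csupp_def by (auto simp: is_path_vp)

lemma cycles_Chn: "(c \<in> cycles n m i j d) = (Chn j d c \<and> DD0 c = (\<lambda>q. 0))"
  unfolding cycles_def by (auto simp: chains_Chn dch_lin fun_eq_iff)

lemma bnd_Chn: "(x \<in> boundaries n m i j d) = (\<exists>b. Chn j (d+1) b \<and> x = DD0 b)"
  unfolding boundaries_def by (auto simp: chains_Chn dch_lin)

lemma cycle_decomp:
  assumes C: "Chn j d c" and Z: "DD0 c = (\<lambda>q. 0 :: 'k::comm_ring_1)"
  shows "c = (\<lambda>q. DD0 (lin hh c) q + PI c q)"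
proof -
  have "PI c = (\<lambda>q. c q - (DD0 (lin hh c) q + lin hh (DD0 c) q))"
    by (rule H_chain[OF Chn_fin[OF C] Chn_Vc[OF C]])
  then have "PI c = (\<lambda>q. c q - DD0 (lin hh c) q)" using Z by simp
  then show ?thesis by (simp add: fun_eq_iff)
qed

lemma n2': "\<not> (0 \<le> 0 - (int n - 2))" using n2 by simp

lemma ZZ_i0: "ZZ i 0 = dl []" by (simp add: ZZ_def)
lemma ZZ_sc_e: "ZZ sc (gdeg n (i,sc)) = dl [(i,sc)]" using sci by (simp add: ZZ_def)
lemma ZZ_i_neg: "ZZ i (0 - (int n - 2)) = (\<lambda>q. 0)" using sci n2 by (simp add: ZZ_def)
lemma ZZ_sc_neg: "ZZ sc (gdeg n (i,sc) - (int n - 2)) = (\<lambda>q. 0)" using sci n2 by (simp add: ZZ_def)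

lemma combine:
  assumes C: "Chn j d (c :: path \<Rightarrow> 'k::comm_ring_1)"
  shows "\<exists>a'. (\<lambda>q. a * WW (ZZ j (d - (int n - 2))) q + (if q = [] \<or> q = [(i,sc)] then c q else 0))
      = (\<lambda>q. a' * ZZ j d q)"
proof (cases "c [] \<noteq> 0")
  case True
  then have j: "j = i" and d: "d = 0" using C by (auto simp: Chn_def)
  have "c [(i,sc)] = 0"
  proof (rule ccontr)
    assume "c [(i,sc)] \<noteq> 0"
    then have "j = sc" using C by (auto simp: Chn_def)
    then show False using j sci by simp
  qed
  note g0 = this
  have e: "(\<lambda>q. if q = [] \<or> q = [(i,sc)] then c q else 0) = (\<lambda>q. c [] * dl [] q)"
  proof -
    show ?thesis
    proof
      fix q show "(if q = [] \<or> q = [(i,sc)] then c q else 0) = c [] * dl [] q"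
        using g0 by (cases "q = []"; cases "q = [(i,sc)]") (auto simp: dl_def)
    qed
  qed
  have z0: "ZZ j (d - (int n - 2)) = (\<lambda>q. 0 :: 'k)" unfolding j d by (rule ZZ_i_neg)
  have z1: "ZZ j d = dl []" unfolding j d by (rule ZZ_i0)
  show ?thesis
    apply (rule exI[where x="c []"])
    unfolding z0 z1 WW_zero using fun_cong[OF e] by (simp add: fun_eq_iff)
next
  case False
  note c0 = False
  show ?thesis
  proof (cases "c [(i,sc)] \<noteq> 0")
    case True
    then have j: "j = sc" and d: "d = gdeg n (i,sc)" using C by (auto simp: Chn_def)
    have e: "(\<lambda>q. if q = [] \<or> q = [(i,sc)] then c q else 0) = (\<lambda>q. c [(i,sc)] * dl [(i,sc)] q)"
      using c0 by (auto simp: dl_def fun_eq_iff)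
    have z0: "ZZ j (d - (int n - 2)) = (\<lambda>q. 0 :: 'k)" unfolding j d by (rule ZZ_sc_neg)
    have z1: "ZZ j d = dl [(i,sc)]" unfolding j d by (rule ZZ_sc_e)
    show ?thesis
      apply (rule exI[where x="c [(i,sc)]"])
      unfolding z0 z1 WW_zero using fun_cong[OF e] by (simp add: fun_eq_iff)
  next
    case False
    then have e: "(\<lambda>q. if q = [] \<or> q = [(i,sc)] then c q else 0) = (\<lambda>q. 0)"
      using c0 by (auto simp: fun_eq_iff)
    show ?thesis
    proof (cases "(j = i \<and> d = 0) \<or> (j = sc \<and> d = gdeg n (i,sc))")
      case True
      then have "ZZ j (d - (int n - 2)) = (\<lambda>q. 0 :: 'k)" using ZZ_i_neg ZZ_sc_neg by auto
      then have z: "ZZ j (d - (int n - 2)) = (\<lambda>q. 0 :: 'k)" .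
      show ?thesis by (rule exI[where x=0]) (simp add: z fun_cong[OF e])
    next
      case False
      then have "ZZ j d = WW (ZZ j (d - (int n - 2)) :: path \<Rightarrow> 'k)" by (intro ZZ_step) auto
      then have z: "ZZ j d = WW (ZZ j (d - (int n - 2)) :: path \<Rightarrow> 'k)" .
      show ?thesis by (rule exI[where x=a]) (simp add: z fun_cong[OF e])
    qed
  qed
qed

lemma ss_zero: "ss (\<lambda>q. 0) = (\<lambda>q. 0)" by (simp add: ss_def)

lemma classify:
  "\<forall>(c :: path \<Rightarrow> 'k::comm_ring_1) d. Chn j d c \<and> DD0 c = (\<lambda>q. 0) \<and> (\<forall>p. c p \<noteq> 0 \<longrightarrow> length p < N) \<longrightarrow>
     (\<exists>a b. Chn j (d+1) b \<and> c = (\<lambda>q. a * ZZ j d q + DD0 b q))"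
proof (induction N rule: less_induct)
  case (less N)
  show ?case
  proof (intro allI impI, elim conjE)
    fix c :: "path \<Rightarrow> 'k" and d
    assume C: "Chn j d c" and Z: "DD0 c = (\<lambda>q. 0)" and L: "\<forall>p. c p \<noteq> 0 \<longrightarrow> length p < N"
    have fc: "fin c" and vc: "Vc c" using C by (simp_all add: Chn_fin Chn_Vc)
    show "\<exists>a b. Chn j (d+1) b \<and> c = (\<lambda>q. a * ZZ j d q + DD0 b q)"
    proof (cases N)
      case 0
      then have "c = (\<lambda>q. 0)" using L by auto
      then show ?thesis using Chn_zero by (intro exI[where x=0] exI[where x="\<lambda>q. 0"]) auto
    next
      case (Suc N')
      let ?cs = "ss c"
      have Ccs: "Chn j (d - (int n - 2)) ?cs" by (rule Chn_ss[OF C])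
      have Zcs: "DD0 ?cs = (\<lambda>q. 0)" using ss_d[OF fc vc] Z by (simp add: ss_zero)
      have Lcs: "\<forall>r. ?cs r \<noteq> 0 \<longrightarrow> length r < N'"
        using L Suc by (auto simp: ss_def)
      obtain a b' where b': "Chn j (d - (int n - 2) + 1) b'"
        and cs: "?cs = (\<lambda>q. a * ZZ j (d - (int n - 2)) q + DD0 b' q)"
        using less[of N'] Suc Ccs Zcs Lcs by blast
      let ?Zp = "ZZ j (d - (int n - 2)) :: path \<Rightarrow> 'k"
      have fZp: "fin ?Zp" using ZZ_Chn Chn_fin by blast
      have fb': "fin b'" and vb': "Vc b'" using b' by (simp_all add: Chn_fin Chn_Vc)
      have WWcs: "WW ?cs = (\<lambda>q. a * WW ?Zp q + DD0 (WW b') q)"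
        unfolding cs by (simp add: WW_add fin_smult fZp fin_DD0 fb' WW_smult dWW[OF fb' vb'])
      define b where "b = (\<lambda>q. lin hh c q + WW b' q)"
      have Cb: "Chn j (d+1) b"
      proof -
        have "Chn j (d - (int n - 2) + 1 + (int n - 2)) (WW b')" by (rule Chn_WW[OF b'])
        then have "Chn j (d + 1) (WW b')" by (simp add: algebra_simps)
        then show ?thesis unfolding b_def by (intro Chn_add Chn_hh C)
      qed
      have Db: "DD0 b = (\<lambda>q. DD0 (lin hh c) q + DD0 (WW b') q)"
        unfolding b_def by (rule lin_add) (simp_all add: fin_hhc fc fin_WW fb')
      obtain a' where a': "(\<lambda>q. a * WW ?Zp q + (if q = [] \<or> q = [(i,sc)] then c q else 0))
          = (\<lambda>q. a' * ZZ j d q)" using combine[OF C] by blast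
      have "c = (\<lambda>q. DD0 (lin hh c) q + PI c q)" by (rule cycle_decomp[OF C Z])
      also have "\<dots> = (\<lambda>q. DD0 (lin hh c) q + ((if q = [] \<or> q = [(i,sc)] then c q else 0) + WW ?cs q))"
        by (simp add: PI_def)
      also have "\<dots> = (\<lambda>q. (a * WW ?Zp q + (if q = [] \<or> q = [(i,sc)] then c q else 0)) + DD0 b q)"
        unfolding WWcs Db by (simp add: fun_eq_iff algebra_simps)
      also have "\<dots> = (\<lambda>q. a' * ZZ j d q + DD0 b q)"
        using a' by (simp add: fun_eq_iff)
      finally show ?thesis using Cb by blast
    qed
  qed
qed

lemma fin_iter: "fin y \<Longrightarrow> fin ((WW ^^ k) y)"
  by (induction k) (simp_all add: fin_WW)

lemma nb:
  assumes e: "length e < 2"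
  shows "fin b \<Longrightarrow> Vc b \<Longrightarrow> (\<lambda>q. a * (WW ^^ k) (dl e) q) = DD0 b \<Longrightarrow> a = (0::'k::comm_ring_1)"
proof (induction k arbitrary: b)
  case 0
  have "DD0 b e = 0"
  proof -
    have "b p * dpath n m p e = 0" for p
    proof (cases "(dpath n m p e :: 'k) = 0")
      case False
      then have "length e = Suc (length p)" by (rule dpath_len)
      then have "p = []" using e by simp
      then show ?thesis by simp
    qed simp
    then show ?thesis by (simp add: lin_def)
  qed
  moreover have "a * dl e e = DD0 b e" using fun_cong[OF "0.prems"(3), of e] by simp
  ultimately show ?case by (simp add: dl_def)
next
  case (Suc k)
  let ?X = "(WW ^^ k) (dl e) :: path \<Rightarrow> 'k"
  have fX: "fin ?X" by (simp add: fin_iter)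
  have "ss (\<lambda>q. a * WW ?X q) = ss (DD0 b)" using Suc.prems(3) by simp
  then have "(\<lambda>q. a * ?X q) = DD0 (ss b)"
    using ss_WW[OF fX] ss_d[OF Suc.prems(1,2)] by (simp add: ss_def fun_eq_iff)
  then show ?case using Suc.IH[of "ss b"] fin_ss[OF Suc.prems(1)] Vc_ss[OF Suc.prems(2)] by blast
qed

definition cond :: "nat \<Rightarrow> int \<Rightarrow> bool" where
  "cond j d \<longleftrightarrow> (j = i \<and> 0 \<le> d \<and> (int n - 2) dvd d) \<or>
      (j = sc \<and> gdeg n (i,sc) \<le> d \<and> (int n - 2) dvd (d - gdeg n (i,sc)))"

lemma bound_ex: "fin c \<Longrightarrow> \<exists>N. \<forall>p. c p \<noteq> 0 \<longrightarrow> length p < N"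
proof -
  assume "fin c"
  then have "finite (length ` csupp c)" by (simp add: fin_def)
  then obtain N where "\<forall>x\<in>length ` csupp c. x < N" by (meson finite_nat_set_iff_bounded)
  then show ?thesis by (auto simp: csupp_def)
qed

lemma iso_main:
  "homology_iso n m i j d (if cond j d then UNIV else ({0} :: 'k::comm_ring_1 set))"
proof (cases "cond j d")
  case True
  let ?z = "ZZ j d :: path \<Rightarrow> 'k"
  have z: "?z \<in> cycles n m i j d" by (simp add: cycles_Chn ZZ_Chn ZZ_cycle)
  have dec: "\<exists>a. (\<lambda>q. c q - a * ?z q) \<in> boundaries n m i j d" if c: "c \<in> cycles n m i j d" for c
  proof -
    have C: "Chn j d c" and Z: "DD0 c = (\<lambda>q. 0)" using c by (simp_all add: cycles_Chn)
    obtain N where "\<forall>p. c p \<noteq> 0 \<longrightarrow> length p < N" using bound_ex Chn_fin[OF C] by blast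
    then obtain a b where b: "Chn j (d+1) b" "c = (\<lambda>q. a * ?z q + DD0 b q)"
      using classify[of j N] C Z by blast
    then have "(\<lambda>q. c q - a * ?z q) = DD0 b" by (simp add: fun_eq_iff)
    then show ?thesis using b(1) by (auto simp: bnd_Chn)
  qed
  have nbz: "a = 0" if az: "(\<lambda>q. a * ?z q) \<in> boundaries n m i j d" for a
  proof -
    obtain b where b: "Chn j (d+1) b" "(\<lambda>q. a * ?z q) = DD0 b" using az by (auto simp: bnd_Chn)
    have fb: "fin b" and vb: "Vc b" using b(1) by (simp_all add: Chn_fin Chn_Vc)
    show ?thesis
    proof (cases "j = i \<and> 0 \<le> d \<and> (int n - 2) dvd d")
      case True
      then have "?z = (WW ^^ nat (d div (int n - 2))) (dl [])" by (simp add: ZZ_def)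
      then show ?thesis using nb[of "[]" b a] fb vb b(2) by simp
    next
      case False
      then have c2: "j = sc \<and> gdeg n (i,sc) \<le> d \<and> (int n - 2) dvd (d - gdeg n (i,sc))"
        using \<open>cond j d\<close> unfolding cond_def by blast
      then have "?z = (WW ^^ nat ((d - gdeg n (i,sc)) div (int n - 2))) (dl [(i,sc)])"
        using False sci by (simp add: ZZ_def)
      then show ?thesis using nb[of "[(i,sc)]" b a] fb vb b(2) by simp
    qed
  qed
  show ?thesis using iso_UNIV[OF z dec nbz] True by simp
next
  case False
  then have Z0: "ZZ j d = (\<lambda>q. 0 :: 'k)" by (auto simp: ZZ_def cond_def)
  have bf: "c \<in> boundaries n m i j d" if c: "c \<in> cycles n m i j d" for c :: "path \<Rightarrow> 'k"
  proof -
    have C: "Chn j d c" and Z: "DD0 c = (\<lambda>q. 0)" using c by (simp_all add: cycles_Chn)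
    obtain N where "\<forall>p. c p \<noteq> 0 \<longrightarrow> length p < N" using bound_ex Chn_fin[OF C] by blast
    then obtain a b where b: "Chn j (d+1) b" "c = (\<lambda>q. a * ZZ j d q + DD0 b q)"
      using classify[of j N] C Z by blast
    then show ?thesis using Z0 by (auto simp: bnd_Chn)
  qed
  have "homology_iso n m i j d ({0} :: 'k set)" by (rule iso_zero) (rule bf)
  then show ?thesis using False by simp
qed

end

lemma polyk_iff: "e > 0 \<Longrightarrow> polyk e d = (if 0 \<le> d \<and> e dvd d then UNIV else {0})"
proof -
  assume e: "e > 0"
  have "(\<exists>p::nat. d = int p * e) \<longleftrightarrow> 0 \<le> d \<and> e dvd d"
  proof
    assume "\<exists>p::nat. d = int p * e"
    then obtain p :: nat where "d = int p * e" by blast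
    then show "0 \<le> d \<and> e dvd d" using e by simp
  next
    assume a: "0 \<le> d \<and> e dvd d"
    then obtain k where k: "d = e * k" by (elim conjE dvdE)
    then have "k \<ge> 0" using a e by (simp add: zero_le_mult_iff)
    then have "d = int (nat k) * e" using k by simp
    then show "\<exists>p::nat. d = int p * e" by blast
  qed
  then show ?thesis by (simp add: polyk_def)
qed

theorem mainTheorem2:
  fixes n m i j :: nat and d :: int
  assumes "n \<ge> 3" and "m \<ge> 3"
    and "1 \<le> i" and "i \<le> m" and "1 \<le> j" and "j \<le> m"
  shows "homology_iso n m i j d
           (if j = i then (polyk (int n - 2) d :: 'k::comm_ring_1 set)
            else if j = i + 1 \<and> 1 \<le> i \<and> i \<le> m - 1 then polyk (int n - 2) d
            else if i = m \<and> j = 1 then polyk (int n - 2) (d - (int n - int m))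
            else {0})"
proof -
  interpret Dm n m i using assms by unfold_locales auto
  have key: "homology_iso n m i j d (if cond j d then UNIV else ({0} :: 'k set))" by (rule iso_main)
  have np: "int n - 2 > 0" using assms by simp
  have eq: "(if j = i then (polyk (int n - 2) d :: 'k set)
            else if j = i + 1 \<and> 1 \<le> i \<and> i \<le> m - 1 then polyk (int n - 2) d
            else if i = m \<and> j = 1 then polyk (int n - 2) (d - (int n - int m))
            else {0}) = (if cond j d then UNIV else {0})"
  proof (cases "j = i")
    case True
    then show ?thesis using sci np by (simp add: polyk_iff cond_def)
  next
    case ji: False
    show ?thesis
    proof (cases "j = i + 1 \<and> 1 \<le> i \<and> i \<le> m - 1")
      case True
      then have s: "sc = i + 1" using assms by (simp add: sc_def)
      have g: "gdeg n (i, sc) = 0" using s by (simp add: gdeg_def)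
      show ?thesis using True ji np s g by (simp add: polyk_iff cond_def)
    next
      case F2: False
      show ?thesis
      proof (cases "i = m \<and> j = 1")
        case True
        then have s: "sc = 1" using sc_def by simp
        have g: "gdeg n (i, sc) = int n - int m" using s True assms by (simp add: gdeg_def)
        have c: "cond j d \<longleftrightarrow> ((j = i \<and> 0 \<le> d \<and> (int n - 2) dvd d) \<or>
            (j = sc \<and> gdeg n (i,sc) \<le> d \<and> (int n - 2) dvd (d - gdeg n (i,sc))))" by (rule cond_def)
        have jsc: "j = sc" using True s by simp
        have "cond j d \<longleftrightarrow> (gdeg n (i,sc) \<le> d \<and> (int n - 2) dvd (d - gdeg n (i,sc)))"
          using c ji jsc by simp
        then have "cond j d \<longleftrightarrow> (0 \<le> d - (int n - int m) \<and> (int n - 2) dvd (d - (int n - int m)))"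
          unfolding g by simp
        moreover have "(if j = i then (polyk (int n - 2) d :: 'k set)
            else if j = i + 1 \<and> 1 \<le> i \<and> i \<le> m - 1 then polyk (int n - 2) d
            else if i = m \<and> j = 1 then polyk (int n - 2) (d - (int n - int m))
            else {0}) = polyk (int n - 2) (d - (int n - int m))"
          using ji F2 True by auto
        ultimately show ?thesis using np by (simp add: polyk_iff)
      next
        case False
        have "j \<noteq> sc" using F2 False ji assms by (auto simp: sc_def split: if_splits)
        then have "\<not> cond j d" using ji by (simp add: cond_def)
        then show ?thesis using False ji F2 by auto
      qed
    qed
  qed
  show ?thesis using key eq by simp
qed


end
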